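(* Let $C$ be an $(n,k)$-code and $0\le d\le k$. Then $C$ is $\operatorname{rMDS}_d(2)$ if and only if $C^\perp$ is $\operatorname{rMDS}^d(2)$.
   Context: For a $k'\times n$ matrix $V$ and $A_1,\dots,A_\ell\subseteq[n]$, $\mathcal G_{A_1,\dots,A_\ell}[V]$ is the $\ell k'\times(k'+\sum|A_i|)$ block matrix whose $i$-th block row has $I_{k'}$ in the first block column and $V|_{A_i}$ (columns of $V$ in $A_i$) in block column $i+1$. A generic matrix has independent indeterminate entries. An $(n,k')$-code with generator matrix $V$ is $\operatorname{rMDS}_d(\ell)$ ($0\le d\le k'$) if $\mathcal G_{A_1,\dots,A_\ell}[V]$ has full column rank whenever $\mathcal G_{A_1,\dots,A_\ell}[W]$ does, for $W$ a generic $(k'-d)\times n$ matrix. Sets are $V$-saturated if $\operatorname{rank}\mathcal G_{A_1,\dots,A_\ell}[V]=\ell k'$, and have the $m$-dimensional saturation property if they are $W$-saturated for a generic $m\times n$ $W$. An $(n,k')$-code with generator matrix $V$ is $\operatorname{rMDS}^d(\ell)$ ($0\le d\le n-k'$) if every family with the $(k'+d)$-dimensional saturation property is $V$-saturated. *)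

theory Defs
  imports "Jordan_Normal_Form.DL_Rank" "HOL-Library.Poly_Mapping"
    "HOL-Computational_Algebra.Fraction_Field"
begin

definition mrank :: "'a::field mat \<Rightarrow> nat" where
  "mrank M = vec_space.rank (dim_row M) M"

definition full_col_rank :: "'a::field mat \<Rightarrow> bool" where
  "full_col_rank M \<longleftrightarrow> mrank M = dim_col M"

text \<open>Column offset of block column j+1 (0-based block j of the sets):
  kk + |A_0| + ... + |A_(j-1)|.\<close>
definition blk_off :: "nat \<Rightarrow> nat set list \<Rightarrow> nat \<Rightarrow> nat" where
  "blk_off kk As j = kk + (\<Sum>i<j. card (As ! i))"

text \<open>The block matrix G_{A_1,...,A_l}[V] for a kk x n matrix V: block row i has the
  identity I_kk in the first block column and V restricted to the columns in A_i
  (in increasing order) in block column i+1; all other blocks are zero.\<close>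
definition Gmat :: "'a::{zero,one} mat \<Rightarrow> nat set list \<Rightarrow> 'a mat" where
  "Gmat V As = (let kk = dim_row V; l = length As in
     mat (l * kk) (blk_off kk As l)
       (\<lambda>(r, c). let i = r div kk; a = r mod kk in
          if c < kk then (if c = a then 1 else 0)
          else if blk_off kk As i \<le> c \<and> c < blk_off kk As (Suc i)
          then V $$ (a, sorted_list_of_set (As ! i) ! (c - blk_off kk As i))
          else 0))"

text \<open>Generic m x n matrix over a field 'a: its entries are distinct independent
  indeterminates X_(i*n+j), viewed in the field of rational functions
  Frac('a[X_0, X_1, ...]).\<close>
definition generic_mat :: "nat \<Rightarrow> nat \<Rightarrow> ((nat \<Rightarrow>\<^sub>0 nat) \<Rightarrow>\<^sub>0 'a::field) fract mat" where
  "generic_mat m n = mat m n (\<lambda>(i, j).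
      Fract (Poly_Mapping.single (Poly_Mapping.single (i * n + j) 1) 1) 1)"

definition rMDS_sub2 :: "nat \<Rightarrow> 'a::field mat \<Rightarrow> bool" where
  "rMDS_sub2 d V \<longleftrightarrow>
     (\<forall>A1 A2. A1 \<subseteq> {..<dim_col V} \<longrightarrow> A2 \<subseteq> {..<dim_col V} \<longrightarrow>
        full_col_rank (Gmat (generic_mat (dim_row V - d) (dim_col V) :: ((nat \<Rightarrow>\<^sub>0 nat) \<Rightarrow>\<^sub>0 'a) fract mat) [A1, A2])
        \<longrightarrow> full_col_rank (Gmat V [A1, A2]))"

definition saturated :: "'a::field mat \<Rightarrow> nat set list \<Rightarrow> bool" where
  "saturated V As \<longleftrightarrow> mrank (Gmat V As) = length As * dim_row V"

definition sat_prop :: "'a::field itself \<Rightarrow> nat \<Rightarrow> nat \<Rightarrow> nat set list \<Rightarrow> bool" where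
  "sat_prop _ m n As \<longleftrightarrow>
     saturated (generic_mat m n :: ((nat \<Rightarrow>\<^sub>0 nat) \<Rightarrow>\<^sub>0 'a) fract mat) As"

definition rMDS_sup2 :: "nat \<Rightarrow> 'a::field mat \<Rightarrow> bool" where
  "rMDS_sup2 d V \<longleftrightarrow>
     (\<forall>A1 A2. A1 \<subseteq> {..<dim_col V} \<longrightarrow> A2 \<subseteq> {..<dim_col V} \<longrightarrow>
        sat_prop TYPE('a) (dim_row V + d) (dim_col V) [A1, A2]
        \<longrightarrow> saturated V [A1, A2])"

end

theory Submission
  imports Defs
begin

context vec_space begin

lemma rank_le_nr:
  assumes A: "A \<in> carrier_mat n nc"
  shows "rank A \<le> n"
proof -
  have s: "set (cols A) \<subseteq> carrier_vec n" using A cols_dim[of A] by (simp add: module_vec_simps)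
  have "vectorspace.dim class_ring (vs (span (set (cols A)))) \<le> dim"
    by (rule subspace_dim[OF span_is_subspace[OF s] fin_dim fin_dim_span_cols[OF A]])
  then show ?thesis unfolding rank_def dim_is_n .
qed

lemma rank_le_card_cols:
  assumes A: "A \<in> carrier_mat n nc"
  shows "rank A \<le> card (set (cols A))"
proof -
  obtain S where "maximal S (\<lambda>T. T \<subseteq> set (cols A) \<and> lin_indpt T)"
    using maximal_exists[of "(\<lambda>T. T \<subseteq> set (cols A) \<and> lin_indpt T)" "card (set (cols A))" "{}"]
    by (meson List.finite_set card_mono empty_iff empty_subsetI finite_lin_indpt2 rev_finite_subset)
  then have "card S \<le> card (set (cols A))" by (simp add: card_mono maximal_def)
  then show ?thesis
    using rank_card_indpt[OF A \<open>maximal S (\<lambda>T. T \<subseteq> set (cols A) \<and> lin_indpt T)\<close>]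
    by simp
qed


lemma rank_full_col_iff:
  assumes A: "A \<in> carrier_mat n nc"
  shows "rank A = nc \<longleftrightarrow> (\<forall>v\<in>carrier_vec nc. A *\<^sub>v v = 0\<^sub>v n \<longrightarrow> v = 0\<^sub>v nc)"
proof
  assume r: "rank A = nc"
  have d: "distinct (cols A)"
  proof (rule ccontr)
    assume nd: "\<not> distinct (cols A)"
    have "card (set (cols A)) < length (cols A)"
      using nd card_distinct card_length le_neq_implies_less by blast
    then show False using rank_le_card_cols[OF A] r A by auto
  qed
  have li: "lin_indpt (set (cols A))" using full_rank_lin_indpt[OF A r d] .
  show "\<forall>v\<in>carrier_vec nc. A *\<^sub>v v = 0\<^sub>v n \<longrightarrow> v = 0\<^sub>v nc"
    using lin_depI[OF A _ _ _ d] li by blast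
next
  assume inj: "\<forall>v\<in>carrier_vec nc. A *\<^sub>v v = 0\<^sub>v n \<longrightarrow> v = 0\<^sub>v nc"
  have d: "distinct (cols A)"
  proof (rule ccontr)
    assume "\<not> distinct (cols A)"
    then obtain i j where ij: "i \<noteq> j" "cols A ! i = cols A ! j" "i < length (cols A)" "j < length (cols A)"
      using distinct_conv_nth by blast
    then have c: "col A i = col A j" "i < nc" "j < nc" using A by auto
    define v :: "'a vec" where "v = unit_vec nc i - unit_vec nc j"
    have vc: "v \<in> carrier_vec nc" unfolding v_def by simp
    have "v $ i = 1" using c ij unfolding v_def by (simp add: diff_zero)
    then have vnz: "v \<noteq> 0\<^sub>v nc" using c by auto
    have "A *\<^sub>v v = 0\<^sub>v n"
    proof (rule eq_vecI)
      fix r assume "r < dim_vec (0\<^sub>v n)"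
      then have r: "r < n" by simp
      have "(A *\<^sub>v v) $ r = (\<Sum>l<nc. A $$ (r, l) * v $ l)"
        using A r unfolding mult_mat_vec_def scalar_prod_def v_def
        by (auto simp: atLeast0LessThan intro!: sum.cong)
      also have "\<dots> = (\<Sum>l<nc. A $$ (r, l) * ((if l = i then 1 else 0) - (if l = j then 1 else 0)))"
        by (rule sum.cong, auto simp: v_def unit_vec_def)
      also have "\<dots> = A $$ (r, i) - A $$ (r, j)"
        using c by (simp add: right_diff_distrib sum_subtractf if_distrib[where f="\<lambda>x. _ * x"] cong: if_cong)
      also have "\<dots> = 0"
        using arg_cong[OF c(1), of "\<lambda>w. w $ r"] c A r by (metis carrier_matD index_col right_minus_eq)
      finally show "(A *\<^sub>v v) $ r = 0\<^sub>v n $ r" using r by simp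
    qed (use A in simp)
    then show False using inj vc vnz by blast
  qed
  have li: "\<not> lin_dep (set (cols A))"
  proof
    assume "lin_dep (set (cols A))"
    from lin_depE[OF A this d] obtain v where "v \<in> carrier_vec nc" "v \<noteq> 0\<^sub>v nc" "A *\<^sub>v v = 0\<^sub>v n" .
    then show False using inj by blast
  qed
  show "rank A = nc" using lin_indpt_full_rank[OF A d li] .
qed


lemma rank_full_row_iff:
  assumes A: "A \<in> carrier_mat n nc"
  shows "rank A = n \<longleftrightarrow> (\<forall>b\<in>carrier_vec n. \<exists>v\<in>carrier_vec nc. A *\<^sub>v v = b)"
proof -
  have s: "set (cols A) \<subseteq> carrier_vec n" using A cols_dim[of A] by (simp add: module_vec_simps)
  have cs: "span (set (cols A)) = {y\<in>carrier_vec n. \<exists>x\<in>carrier_vec nc. A *\<^sub>v x = y}"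
    using col_space_eq[OF A] A unfolding col_space_def by simp
  show ?thesis
  proof
    assume r: "rank A = n"
    show "\<forall>b\<in>carrier_vec n. \<exists>v\<in>carrier_vec nc. A *\<^sub>v v = b"
    proof (rule ccontr)
      assume "\<not> ?thesis"
      then obtain b where b: "b \<in> carrier_vec n" "b \<notin> span (set (cols A))" using cs by auto
      obtain S where S: "maximal S (\<lambda>T. T \<subseteq> set (cols A) \<and> lin_indpt T)"
        using maximal_exists[of "(\<lambda>T. T \<subseteq> set (cols A) \<and> lin_indpt T)" "card (set (cols A))" "{}"]
        by (meson List.finite_set card_mono empty_iff empty_subsetI finite_lin_indpt2 rev_finite_subset)
      have cS: "card S = n" using rank_card_indpt[OF A S] r by simp
      have SA: "S \<subseteq> set (cols A)" "lin_indpt S" using S unfolding maximal_def by auto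
      have fS: "finite S" using SA(1) finite_subset by blast
      have Sc: "S \<subseteq> carrier_vec n" using SA(1) s by auto
      have "span S \<subseteq> span (set (cols A))" by (rule span_is_monotone[OF SA(1)])
      then have bS: "b \<notin> span S" using b by auto
      have bnS: "b \<notin> S" using bS in_own_span[OF Sc] by auto
      have "\<not> lin_dep (S \<union> {b})"
        using lin_dep_iff_in_span[OF Sc SA(2) _ bnS] b bS by simp
      then have "card (S \<union> {b}) \<le> dim"
        using li_le_dim(2)[OF fin_dim] Sc b by auto
      moreover have "card (S \<union> {b}) = n + 1" using cS fS bnS by simp
      ultimately show False using dim_is_n by simp
    qed
  next
    assume sp: "\<forall>b\<in>carrier_vec n. \<exists>v\<in>carrier_vec nc. A *\<^sub>v v = b"
    have "span (set (cols A)) = carrier_vec n" using cs sp by auto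
    then have "span_vs (set (cols A)) = V" by simp
    then show "rank A = n" unfolding rank_def using dim_is_n by simp
  qed
qed

end

definition injm :: "'a::field mat \<Rightarrow> bool" where
  "injm A \<longleftrightarrow> (\<forall>v\<in>carrier_vec (dim_col A). A *\<^sub>v v = 0\<^sub>v (dim_row A) \<longrightarrow> v = 0\<^sub>v (dim_col A))"

definition surjm :: "'a::field mat \<Rightarrow> bool" where
  "surjm A \<longleftrightarrow> (\<forall>b\<in>carrier_vec (dim_row A). \<exists>v\<in>carrier_vec (dim_col A). A *\<^sub>v v = b)"

lemma full_col_rank_iff_injm: "full_col_rank A \<longleftrightarrow> injm A"
  unfolding full_col_rank_def mrank_def injm_def
  by (rule vec_space.rank_full_col_iff) auto

lemma mrank_row_iff_surjm: "mrank A = dim_row A \<longleftrightarrow> surjm A"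
  unfolding mrank_def surjm_def
  by (rule vec_space.rank_full_row_iff) auto

lemma mrank_le_row: "mrank A \<le> dim_row A"
  unfolding mrank_def by (rule vec_space.rank_le_nr) auto

lemma mrank_le_col: "mrank A \<le> dim_col A"
  unfolding mrank_def by (rule vec_space.rank_le_nc) auto

lemma injm_bound: "injm A \<Longrightarrow> dim_col A \<le> dim_row A"
  using full_col_rank_iff_injm[of A] mrank_le_row[of A] unfolding full_col_rank_def by simp

lemma surjm_bound: "surjm A \<Longrightarrow> dim_row A \<le> dim_col A"
  using mrank_row_iff_surjm[of A] mrank_le_col[of A] by simp

lemma injm_square_surjm: "dim_row A = dim_col A \<Longrightarrow> injm A \<Longrightarrow> surjm A"
  using full_col_rank_iff_injm[of A] mrank_row_iff_surjm[of A] unfolding full_col_rank_def by simp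

definition subm :: "'a mat \<Rightarrow> nat set \<Rightarrow> 'a mat" where
  "subm M A = mat (dim_row M) (card A) (\<lambda>(i,t). M $$ (i, sorted_list_of_set A ! t))"

definition suppd :: "'a::zero vec \<Rightarrow> nat set \<Rightarrow> bool" where
  "suppd x A \<longleftrightarrow> (\<forall>j<dim_vec x. j \<notin> A \<longrightarrow> x $ j = 0)"

definition restr :: "nat set \<Rightarrow> 'a vec \<Rightarrow> 'a vec" where
  "restr A x = vec (card A) (\<lambda>t. x $ (sorted_list_of_set A ! t))"

definition extv :: "nat \<Rightarrow> nat set \<Rightarrow> 'a::zero vec \<Rightarrow> 'a vec" where
  "extv N A y = vec N (\<lambda>j. if j \<in> A then y $ (inv_into {..<card A} (\<lambda>t. sorted_list_of_set A ! t) j) else 0)"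

lemma bij_sl: "finite A \<Longrightarrow> bij_betw (\<lambda>t. sorted_list_of_set A ! t) {..<card A} A"
  by (rule bij_betw_nth) auto

lemma sl_in: "finite A \<Longrightarrow> t < card A \<Longrightarrow> sorted_list_of_set A ! t \<in> A"
  using bij_sl bij_betwE by blast

lemma subm_carrier[simp]: "dim_row (subm M A) = dim_row M" "dim_col (subm M A) = card A"
  unfolding subm_def by auto

lemma mult_suppd:
  fixes M :: "'a::comm_ring_1 mat"
  assumes M: "M \<in> carrier_mat kk N" and AN: "A \<subseteq> {..<N}" and x: "x \<in> carrier_vec N"
    and s: "suppd x A"
  shows "M *\<^sub>v x = subm M A *\<^sub>v restr A x"
proof (rule eq_vecI)
  have fA: "finite A" using AN finite_subset by blast
  fix i assume "i < dim_vec (subm M A *\<^sub>v restr A x)"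
  then have i: "i < kk" using M by simp
  have "(M *\<^sub>v x) $ i = (\<Sum>j\<in>{..<N}. M $$ (i, j) * x $ j)"
    using M x i unfolding mult_mat_vec_def scalar_prod_def by (auto simp: atLeast0LessThan)
  also have "\<dots> = (\<Sum>j\<in>A. M $$ (i, j) * x $ j)"
    by (rule sum.mono_neutral_right) (use AN s x in \<open>auto simp: suppd_def\<close>)
  also have "\<dots> = (\<Sum>t\<in>{..<card A}. M $$ (i, sorted_list_of_set A ! t) * x $ (sorted_list_of_set A ! t))"
    by (rule sum.reindex_bij_betw[OF bij_sl[OF fA], symmetric])
  also have "\<dots> = (subm M A *\<^sub>v restr A x) $ i"
    using M i unfolding mult_mat_vec_def scalar_prod_def subm_def restr_def
    by (auto simp: atLeast0LessThan intro!: sum.cong)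
  finally show "(M *\<^sub>v x) $ i = (subm M A *\<^sub>v restr A x) $ i" .
qed (use M in simp)

lemma extv_carrier[simp]: "extv N A y \<in> carrier_vec N" "dim_vec (extv N A y) = N"
  unfolding extv_def by auto

lemma suppd_extv: "suppd (extv N A y) A"
  unfolding suppd_def extv_def by auto

lemma restr_carrier[simp]: "restr A x \<in> carrier_vec (card A)" "dim_vec (restr A x) = card A"
  unfolding restr_def by auto

lemma restr_extv:
  assumes AN: "A \<subseteq> {..<N}" and y: "y \<in> carrier_vec (card A)"
  shows "restr A (extv N A y) = y"
proof (rule eq_vecI)
  have fA: "finite A" using AN finite_subset by blast
  fix t assume "t < dim_vec y"
  then have t: "t < card A" using y by simp
  have inA: "sorted_list_of_set A ! t \<in> A" using sl_in[OF fA t] .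
  then have "sorted_list_of_set A ! t < N" using AN by auto
  then show "restr A (extv N A y) $ t = y $ t"
    using t inA bij_betw_inv_into_left[OF bij_sl[OF fA], of t]
    unfolding restr_def extv_def by simp
qed (use y in simp)

lemma extv_restr:
  assumes AN: "A \<subseteq> {..<N}" and x: "x \<in> carrier_vec N" and s: "suppd x A"
  shows "extv N A (restr A x) = x"
proof (rule eq_vecI)
  have fA: "finite A" using AN finite_subset by blast
  fix j assume "j < dim_vec x"
  then have j: "j < N" using x by simp
  show "extv N A (restr A x) $ j = x $ j"
  proof (cases "j \<in> A")
    case True
    have iv: "inv_into {..<card A} (\<lambda>t. sorted_list_of_set A ! t) j < card A"
      using bij_betw_inv_into[OF bij_sl[OF fA]] True bij_betwE by blast
    show ?thesis using True j iv bij_betw_inv_into_right[OF bij_sl[OF fA] True]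
      unfolding restr_def extv_def by simp
  next
    case False
    then show ?thesis using s j x unfolding extv_def suppd_def by simp
  qed
qed (use x in simp)

lemma restr_zero:
  assumes AN: "A \<subseteq> {..<N}"
  shows "restr A (0\<^sub>v N) = 0\<^sub>v (card A)"
proof (rule eq_vecI)
  have fA: "finite A" using AN finite_subset by blast
  fix t assume "t < dim_vec (0\<^sub>v (card A) :: 'a vec)"
  then have t: "t < card A" by simp
  then have "sorted_list_of_set A ! t < N" using sl_in[OF fA t] AN by auto
  then show "restr A (0\<^sub>v N) $ t = (0\<^sub>v (card A) :: 'a vec) $ t" using t unfolding restr_def by simp
qed simp

lemma extv_zero:
  assumes AN: "A \<subseteq> {..<N}"
  shows "extv N A (0\<^sub>v (card A)) = (0\<^sub>v N :: 'a::zero vec)"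
proof (rule eq_vecI)
  have fA: "finite A" using AN finite_subset by blast
  fix j assume "j < dim_vec (0\<^sub>v N :: 'a vec)"
  then have j: "j < N" by simp
  have "j \<in> A \<Longrightarrow> inv_into {..<card A} (\<lambda>t. sorted_list_of_set A ! t) j < card A"
      using bij_betw_inv_into[OF bij_sl[OF fA]] bij_betwE by blast
  then show "extv N A (0\<^sub>v (card A)) $ j = (0\<^sub>v N :: 'a vec) $ j" using j unfolding extv_def by auto
qed simp

definition indep_on :: "'a::field mat \<Rightarrow> nat set \<Rightarrow> bool" where
  "indep_on M A \<longleftrightarrow> (\<forall>x\<in>carrier_vec (dim_col M). suppd x A \<longrightarrow> M *\<^sub>v x = 0\<^sub>v (dim_row M) \<longrightarrow> x = 0\<^sub>v (dim_col M))"

definition spans_on :: "'a::field mat \<Rightarrow> nat set \<Rightarrow> bool" where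
  "spans_on M A \<longleftrightarrow> (\<forall>b\<in>carrier_vec (dim_row M). \<exists>x\<in>carrier_vec (dim_col M). suppd x A \<and> M *\<^sub>v x = b)"

lemma indep_on_iff:
  assumes M: "M \<in> carrier_mat kk N" and AN: "A \<subseteq> {..<N}"
  shows "indep_on M A \<longleftrightarrow> injm (subm M A)"
proof
  assume i: "indep_on M A"
  show "injm (subm M A)" unfolding injm_def
  proof (intro ballI impI)
    fix y assume y: "y \<in> carrier_vec (dim_col (subm M A))" and z: "subm M A *\<^sub>v y = 0\<^sub>v (dim_row (subm M A))"
    have y': "y \<in> carrier_vec (card A)" using y by simp
    have "M *\<^sub>v extv N A y = subm M A *\<^sub>v y"
      using mult_suppd[OF M AN extv_carrier(1) suppd_extv] restr_extv[OF AN y'] by simp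
    then have "extv N A y = 0\<^sub>v N" using i z M unfolding indep_on_def
      by (metis carrier_matD(1) carrier_matD(2) extv_carrier(1) subm_carrier(1) suppd_extv)
    then have "restr A (extv N A y) = 0\<^sub>v (card A)" using restr_zero[OF AN] by simp
    then show "y = 0\<^sub>v (dim_col (subm M A))" using restr_extv[OF AN y'] by simp
  qed
next
  assume i: "injm (subm M A)"
  show "indep_on M A" unfolding indep_on_def
  proof (intro ballI impI)
    fix x assume x: "x \<in> carrier_vec (dim_col M)" and s: "suppd x A" and z: "M *\<^sub>v x = 0\<^sub>v (dim_row M)"
    have x': "x \<in> carrier_vec N" using x M by simp
    have "subm M A *\<^sub>v restr A x = 0\<^sub>v kk" using mult_suppd[OF M AN x' s] z M by simp
    then have "restr A x = 0\<^sub>v (card A)" using i M unfolding injm_def by simp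
    then have "extv N A (restr A x) = 0\<^sub>v N" using extv_zero[OF AN] by simp
    then show "x = 0\<^sub>v (dim_col M)" using extv_restr[OF AN x' s] M by simp
  qed
qed

lemma spans_on_iff:
  assumes M: "M \<in> carrier_mat kk N" and AN: "A \<subseteq> {..<N}"
  shows "spans_on M A \<longleftrightarrow> surjm (subm M A)"
proof
  assume sp: "spans_on M A"
  show "surjm (subm M A)" unfolding surjm_def
  proof
    fix b :: "'a vec" assume b: "b \<in> carrier_vec (dim_row (subm M A))"
    then obtain x where x: "x \<in> carrier_vec N" "suppd x A" "M *\<^sub>v x = b"
      using sp M unfolding spans_on_def by auto
    show "\<exists>v\<in>carrier_vec (dim_col (subm M A)). subm M A *\<^sub>v v = b"
      using mult_suppd[OF M AN x(1,2)] x(3) by (intro bexI[of _ "restr A x"]) auto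
  qed
next
  assume sp: "surjm (subm M A)"
  show "spans_on M A" unfolding spans_on_def
  proof
    fix b :: "'a vec" assume b: "b \<in> carrier_vec (dim_row M)"
    then obtain y where y: "y \<in> carrier_vec (card A)" "subm M A *\<^sub>v y = b"
      using sp M unfolding surjm_def by auto
    have "M *\<^sub>v extv N A y = b"
      using mult_suppd[OF M AN extv_carrier(1) suppd_extv] restr_extv[OF AN y(1)] y(2) by simp
    then show "\<exists>x\<in>carrier_vec (dim_col M). suppd x A \<and> M *\<^sub>v x = b"
      using M suppd_extv by (intro bexI[of _ "extv N A y"]) auto
  qed
qed

lemma indep_on_card:
  assumes M: "M \<in> carrier_mat kk N" and AN: "A \<subseteq> {..<N}" and i: "indep_on M A"
  shows "card A \<le> kk"
  using injm_bound[of "subm M A"] indep_on_iff[OF M AN] i M by simp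

lemma spans_on_card:
  assumes M: "M \<in> carrier_mat kk N" and AN: "A \<subseteq> {..<N}" and i: "spans_on M A"
  shows "kk \<le> card A"
  using surjm_bound[of "subm M A"] spans_on_iff[OF M AN] i M by simp

lemma sum_split_add: fixes a b :: nat shows "(\<Sum>c<a+b. f c) = (\<Sum>c<a. f c) + (\<Sum>t<b. f (a+t))"
  by (induction b) (auto simp: add.assoc)

lemma blk_off_2:
  "blk_off kk [A1, A2] 0 = kk" "blk_off kk [A1, A2] (Suc 0) = kk + card A1"
  "blk_off kk [A1, A2] 2 = kk + card A1 + card A2"
  "blk_off kk [A1, A2] (Suc (Suc 0)) = kk + card A1 + card A2"
  unfolding blk_off_def by (auto simp: numeral_2_eq_2)

lemma Gmat_carrier:
  "Gmat M [A1, A2] \<in> carrier_mat (2 * dim_row M) (dim_row M + card A1 + card A2)"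
  unfolding Gmat_def Let_def by (auto simp: blk_off_2 numeral_2_eq_2)

lemma subm_mult_nth:
  assumes r: "r < dim_row M" and y: "y \<in> carrier_vec (card A)"
  shows "(subm M A *\<^sub>v y) $ r = (\<Sum>t<card A. M $$ (r, sorted_list_of_set A ! t) * y $ t)"
  using r y unfolding mult_mat_vec_def scalar_prod_def subm_def
  by (auto simp: atLeast0LessThan intro!: sum.cong)

lemma Gmat_top:
  fixes M :: "'a::comm_ring_1 mat"
  assumes x: "x \<in> carrier_vec (dim_row M + card A1 + card A2)" and r: "r < dim_row M"
  shows "(Gmat M [A1, A2] *\<^sub>v x) $ r = x $ r + (\<Sum>t<card A1. M $$ (r, sorted_list_of_set A1 ! t) * x $ (dim_row M + t))"
proof -
  let ?kk = "dim_row M" and ?p = "card A1" and ?q = "card A2"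
  let ?G = "Gmat M [A1, A2]"
  have G: "?G \<in> carrier_mat (2 * ?kk) (?kk + ?p + ?q)" by (rule Gmat_carrier)
  have rdm: "r div ?kk = 0" "r mod ?kk = r" using r by auto
  have ent: "?G $$ (r, c) = (if c < ?kk then (if c = r then 1 else 0)
        else if c < ?kk + ?p then M $$ (r, sorted_list_of_set A1 ! (c - ?kk)) else 0)"
    if "c < ?kk + ?p + ?q" for c
    using that r rdm blk_off_2[of ?kk A1 A2] unfolding Gmat_def Let_def
    by (auto simp: blk_off_2 numeral_2_eq_2)
  have "(?G *\<^sub>v x) $ r = (\<Sum>c<?kk + ?p + ?q. ?G $$ (r, c) * x $ c)"
    using G x r unfolding mult_mat_vec_def scalar_prod_def
    by (auto simp: atLeast0LessThan intro!: sum.cong)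
  also have "\<dots> = (\<Sum>c<?kk + (?p + ?q). ?G $$ (r, c) * x $ c)" by (simp add: add.assoc)
  also have "\<dots> = (\<Sum>c<?kk. ?G $$ (r, c) * x $ c) + (\<Sum>t<?p + ?q. ?G $$ (r, ?kk + t) * x $ (?kk + t))"
    by (rule sum_split_add)
  also have "(\<Sum>c<?kk. ?G $$ (r, c) * x $ c) = (\<Sum>c<?kk. (if c = r then x $ c else 0))"
    by (rule sum.cong) (auto simp: ent)
  also have "\<dots> = x $ r" using r by simp
  also have "(\<Sum>t<?p + ?q. ?G $$ (r, ?kk + t) * x $ (?kk + t))
      = (\<Sum>t<?p. ?G $$ (r, ?kk + t) * x $ (?kk + t)) + (\<Sum>t<?q. ?G $$ (r, ?kk + (?p + t)) * x $ (?kk + (?p + t)))"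
    by (rule sum_split_add)
  also have "(\<Sum>t<?q. ?G $$ (r, ?kk + (?p + t)) * x $ (?kk + (?p + t))) = 0"
    by (rule sum.neutral) (auto simp: ent)
  also have "(\<Sum>t<?p. ?G $$ (r, ?kk + t) * x $ (?kk + t)) = (\<Sum>t<?p. M $$ (r, sorted_list_of_set A1 ! t) * x $ (?kk + t))"
    by (rule sum.cong) (auto simp: ent)
  finally show ?thesis by simp
qed

lemma Gmat_bot:
  fixes M :: "'a::comm_ring_1 mat"
  assumes x: "x \<in> carrier_vec (dim_row M + card A1 + card A2)" and a: "a < dim_row M"
  shows "(Gmat M [A1, A2] *\<^sub>v x) $ (dim_row M + a) = x $ a + (\<Sum>t<card A2. M $$ (a, sorted_list_of_set A2 ! t) * x $ (dim_row M + card A1 + t))"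
proof -
  let ?kk = "dim_row M" and ?p = "card A1" and ?q = "card A2"
  let ?G = "Gmat M [A1, A2]"
  let ?r = "?kk + a"
  have G: "?G \<in> carrier_mat (2 * ?kk) (?kk + ?p + ?q)" by (rule Gmat_carrier)
  have rdm: "?r div ?kk = 1" "?r mod ?kk = a" using a by auto
  have ent: "?G $$ (?r, c) = (if c < ?kk then (if c = a then 1 else 0)
        else if c < ?kk + ?p then 0 else M $$ (a, sorted_list_of_set A2 ! (c - (?kk + ?p))))"
    if "c < ?kk + ?p + ?q" for c
    using that a rdm blk_off_2[of ?kk A1 A2] unfolding Gmat_def Let_def
    by (auto simp: blk_off_2 numeral_2_eq_2)
  have "(?G *\<^sub>v x) $ ?r = (\<Sum>c<?kk + ?p + ?q. ?G $$ (?r, c) * x $ c)"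
    using G x a unfolding mult_mat_vec_def scalar_prod_def
    by (auto simp: atLeast0LessThan intro!: sum.cong)
  also have "\<dots> = (\<Sum>c<?kk + (?p + ?q). ?G $$ (?r, c) * x $ c)" by (simp add: add.assoc)
  also have "\<dots> = (\<Sum>c<?kk. ?G $$ (?r, c) * x $ c) + (\<Sum>t<?p + ?q. ?G $$ (?r, ?kk + t) * x $ (?kk + t))"
    by (rule sum_split_add)
  also have "(\<Sum>c<?kk. ?G $$ (?r, c) * x $ c) = (\<Sum>c<?kk. (if c = a then x $ c else 0))"
    by (rule sum.cong) (auto simp: ent)
  also have "\<dots> = x $ a" using a by simp
  also have "(\<Sum>t<?p + ?q. ?G $$ (?r, ?kk + t) * x $ (?kk + t))
      = (\<Sum>t<?p. ?G $$ (?r, ?kk + t) * x $ (?kk + t)) + (\<Sum>t<?q. ?G $$ (?r, ?kk + (?p + t)) * x $ (?kk + (?p + t)))"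
    by (rule sum_split_add)
  also have "(\<Sum>t<?p. ?G $$ (?r, ?kk + t) * x $ (?kk + t)) = 0"
    by (rule sum.neutral) (auto simp: ent)
  also have "(\<Sum>t<?q. ?G $$ (?r, ?kk + (?p + t)) * x $ (?kk + (?p + t))) = (\<Sum>t<?q. M $$ (a, sorted_list_of_set A2 ! t) * x $ (?kk + ?p + t))"
    by (rule sum.cong) (auto simp: ent add.assoc)
  finally show ?thesis by simp
qed

lemma mult_nth:
  assumes M: "M \<in> carrier_mat kk N" and r: "r < kk" and z: "z \<in> carrier_vec N"
  shows "(M *\<^sub>v z) $ r = (\<Sum>j<N. M $$ (r, j) * z $ j)"
  using M r z unfolding mult_mat_vec_def scalar_prod_def by (auto simp: atLeast0LessThan)

lemma sum_supp:
  fixes z :: "'a::comm_ring_1 vec"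
  assumes AN: "A \<subseteq> {..<N}" and z: "z \<in> carrier_vec N" and s: "suppd z A"
  shows "(\<Sum>j<N. f j * z $ j) = (\<Sum>j\<in>A. f j * z $ j)"
  by (rule sum.mono_neutral_right) (use AN s z in \<open>auto simp: suppd_def\<close>)

lemma reidx:
  assumes "finite A"
  shows "(\<Sum>t<card A. f (sorted_list_of_set A ! t)) = (\<Sum>j\<in>A. f j)"
  by (rule sum.reindex_bij_betw[OF bij_sl[OF assms]])

lemma extv_nth:
  assumes AN: "A \<subseteq> {..<N}" and t: "t < card A"
  shows "extv N A y $ (sorted_list_of_set A ! t) = y $ t"
proof -
  have fA: "finite A" using AN finite_subset by blast
  have inA: "sorted_list_of_set A ! t \<in> A" using sl_in[OF fA t] .
  then have "sorted_list_of_set A ! t < N" using AN by auto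
  then show ?thesis
    using t inA bij_betw_inv_into_left[OF bij_sl[OF fA], of t] unfolding extv_def by simp
qed

lemma extv_out: "j \<notin> A \<Longrightarrow> j < N \<Longrightarrow> extv N A y $ j = 0"
  unfolding extv_def by simp

lemma M_extv:
  fixes M :: "'a::comm_ring_1 mat"
  assumes M: "M \<in> carrier_mat kk N" and AN: "A \<subseteq> {..<N}" and y: "y \<in> carrier_vec (card A)"
  shows "M *\<^sub>v extv N A y = subm M A *\<^sub>v y"
  using mult_suppd[OF M AN extv_carrier(1) suppd_extv] restr_extv[OF AN y] by simp

lemma sl_inv:
  assumes fA: "finite A" and j: "j \<in> A"
  obtains t where "t < card A" "sorted_list_of_set A ! t = j"
  using bij_sl[OF fA] j by (metis bij_betw_iff_bijections lessThan_iff)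

lemma Gmat_inj:
  fixes M :: "'a::field mat"
  assumes M: "M \<in> carrier_mat kk N" and A1: "A1 \<subseteq> {..<N}" and A2: "A2 \<subseteq> {..<N}"
    and d: "A1 \<inter> A2 = {}" and ind: "indep_on M (A1 \<union> A2)"
  shows "injm (Gmat M [A1, A2])"
  unfolding injm_def
proof (intro ballI impI)
  let ?G = "Gmat M [A1, A2]" and ?p = "card A1" and ?q = "card A2"
  let ?s1 = "sorted_list_of_set A1" and ?s2 = "sorted_list_of_set A2"
  have kk: "dim_row M = kk" using M by simp
  have G: "?G \<in> carrier_mat (2 * kk) (kk + ?p + ?q)" using Gmat_carrier[of M A1 A2] kk by simp
  have f1: "finite A1" and f2: "finite A2" using A1 A2 finite_subset by blast+
  fix x :: "'a vec" assume x: "x \<in> carrier_vec (dim_col ?G)" and Gx: "?G *\<^sub>v x = 0\<^sub>v (dim_row ?G)"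
  have x': "x \<in> carrier_vec (kk + ?p + ?q)" using x G by simp
  have top: "x $ r + (\<Sum>t<?p. M $$ (r, ?s1 ! t) * x $ (kk + t)) = 0" if r: "r < kk" for r
    using Gmat_top[of x M A1 A2 r] x' r kk arg_cong[OF Gx, of "\<lambda>v. v $ r"] G by simp
  have bot: "x $ a + (\<Sum>t<?q. M $$ (a, ?s2 ! t) * x $ (kk + ?p + t)) = 0" if a: "a < kk" for a
    using Gmat_bot[of x M A1 A2 a] x' a kk arg_cong[OF Gx, of "\<lambda>v. v $ (kk + a)"] G by simp
  define y1 where "y1 = vec ?p (\<lambda>t. x $ (kk + t))"
  define y2 where "y2 = vec ?q (\<lambda>t. x $ (kk + ?p + t))"
  define z where "z = extv N A1 y1 - extv N A2 y2"
  have zc: "z \<in> carrier_vec N" unfolding z_def by simp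
  have zs: "suppd z (A1 \<union> A2)" unfolding suppd_def z_def by (auto simp: extv_out)
  have Mz: "M *\<^sub>v z = 0\<^sub>v kk"
  proof (rule eq_vecI)
    fix r assume "r < dim_vec (0\<^sub>v kk :: 'a vec)"
    then have r: "r < kk" by simp
    have "M *\<^sub>v z = M *\<^sub>v extv N A1 y1 - M *\<^sub>v extv N A2 y2"
      unfolding z_def by (rule mult_minus_distrib_mat_vec[OF M]) auto
    also have "\<dots> = subm M A1 *\<^sub>v y1 - subm M A2 *\<^sub>v y2"
      using M_extv[OF M A1, of y1] M_extv[OF M A2, of y2] by (simp add: y1_def y2_def)
    finally have "(M *\<^sub>v z) $ r = (subm M A1 *\<^sub>v y1) $ r - (subm M A2 *\<^sub>v y2) $ r"
      using r M by simp
    also have "(subm M A1 *\<^sub>v y1) $ r = (\<Sum>t<?p. M $$ (r, ?s1 ! t) * y1 $ t)"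
      by (rule subm_mult_nth) (use r kk in \<open>auto simp: y1_def\<close>)
    also have "\<dots> = (\<Sum>t<?p. M $$ (r, ?s1 ! t) * x $ (kk + t))"
      by (rule sum.cong) (auto simp: y1_def)
    also have "(subm M A2 *\<^sub>v y2) $ r = (\<Sum>t<?q. M $$ (r, ?s2 ! t) * y2 $ t)"
      by (rule subm_mult_nth) (use r kk in \<open>auto simp: y2_def\<close>)
    also have "\<dots> = (\<Sum>t<?q. M $$ (r, ?s2 ! t) * x $ (kk + ?p + t))"
      by (rule sum.cong) (auto simp: y2_def)
    also have "(\<Sum>t<?p. M $$ (r, ?s1 ! t) * x $ (kk + t)) - (\<Sum>t<?q. M $$ (r, ?s2 ! t) * x $ (kk + ?p + t)) = 0"
    proof -
      have "x $ r + (\<Sum>t<?p. M $$ (r, ?s1 ! t) * x $ (kk + t)) = x $ r + (\<Sum>t<?q. M $$ (r, ?s2 ! t) * x $ (kk + ?p + t))"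
        using top[OF r] bot[OF r] by simp
      then have "(\<Sum>t<?p. M $$ (r, ?s1 ! t) * x $ (kk + t)) = (\<Sum>t<?q. M $$ (r, ?s2 ! t) * x $ (kk + ?p + t))"
        by (rule add_left_imp_eq)
      then show ?thesis by (simp only: diff_self)
    qed
    finally show "(M *\<^sub>v z) $ r = (0\<^sub>v kk :: 'a vec) $ r" using r by simp
  qed (use M in simp)
  have z0: "z = 0\<^sub>v N"
  proof -
    have "\<forall>x\<in>carrier_vec N. suppd x (A1 \<union> A2) \<longrightarrow> M *\<^sub>v x = 0\<^sub>v kk \<longrightarrow> x = 0\<^sub>v N"
      using ind M unfolding indep_on_def by simp
    then show ?thesis using zc zs Mz by blast
  qed
  have x1: "x $ (kk + t) = 0" if t: "t < ?p" for t
  proof -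
    have inA: "?s1 ! t \<in> A1" using sl_in[OF f1 t] .
    then have "?s1 ! t \<notin> A2" "?s1 ! t < N" using d A1 by auto
    then have "z $ (?s1 ! t) = y1 $ t"
      unfolding z_def using extv_nth[OF A1 t, of y1] extv_out[of "?s1 ! t" A2 N y2] by simp
    then show ?thesis using z0 t \<open>?s1 ! t < N\<close> by (simp add: y1_def)
  qed
  have x2: "x $ (kk + ?p + t) = 0" if t: "t < ?q" for t
  proof -
    have inA: "?s2 ! t \<in> A2" using sl_in[OF f2 t] .
    then have "?s2 ! t \<notin> A1" "?s2 ! t < N" using d A2 by auto
    then have "z $ (?s2 ! t) = - y2 $ t"
      unfolding z_def using extv_nth[OF A2 t, of y2] extv_out[of "?s2 ! t" A1 N y1] by simp
    then show ?thesis using z0 t \<open>?s2 ! t < N\<close> by (simp add: y2_def)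
  qed
  have x0: "x $ r = 0" if r: "r < kk" for r
    using top[OF r] x1 by (simp add: sum.neutral)
  show "x = 0\<^sub>v (dim_col ?G)"
  proof (rule eq_vecI)
    fix c assume "c < dim_vec (0\<^sub>v (dim_col ?G) :: 'a vec)"
    then have c: "c < kk + ?p + ?q" using G by simp
    have "x $ c = 0"
    proof (cases "c < kk")
      case True then show ?thesis using x0 by simp
    next
      case False
      show ?thesis
      proof (cases "c < kk + ?p")
        case True then show ?thesis using x1[of "c - kk"] False by simp
      next
        case F2: False then show ?thesis using x2[of "c - kk - ?p"] False c by simp
      qed
    qed
    then show "x $ c = 0\<^sub>v (dim_col ?G) $ c" using c G by simp
  qed (use x G in simp)
qed


lemma Gmat_inj_disj:
  fixes M :: "'a::field mat"
  assumes M: "M \<in> carrier_mat kk N" and A1: "A1 \<subseteq> {..<N}" and A2: "A2 \<subseteq> {..<N}"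
    and inj: "injm (Gmat M [A1, A2])"
  shows "A1 \<inter> A2 = {}"
proof (rule ccontr)
  assume "A1 \<inter> A2 \<noteq> {}"
  then obtain j where j1: "j \<in> A1" and j2: "j \<in> A2" by blast
  let ?G = "Gmat M [A1, A2]" and ?p = "card A1" and ?q = "card A2"
  let ?s1 = "sorted_list_of_set A1" and ?s2 = "sorted_list_of_set A2"
  have kk: "dim_row M = kk" using M by simp
  have G: "?G \<in> carrier_mat (2 * kk) (kk + ?p + ?q)" using Gmat_carrier[of M A1 A2] kk by simp
  have f1: "finite A1" and f2: "finite A2" using A1 A2 finite_subset by blast+
  obtain t1 where t1: "t1 < ?p" "?s1 ! t1 = j" using sl_inv[OF f1 j1] by blast
  obtain t2 where t2: "t2 < ?q" "?s2 ! t2 = j" using sl_inv[OF f2 j2] by blast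
  define x :: "'a vec" where "x = vec (kk + ?p + ?q) (\<lambda>c. if c < kk then - M $$ (c, j)
      else if c = kk + t1 then 1 else if c = kk + ?p + t2 then 1 else 0)"
  have xc: "x \<in> carrier_vec (kk + ?p + ?q)" unfolding x_def by simp
  have Gx: "?G *\<^sub>v x = 0\<^sub>v (2 * kk)"
  proof (rule eq_vecI)
    fix r assume "r < dim_vec (0\<^sub>v (2 * kk) :: 'a vec)"
    then have r: "r < 2 * kk" by simp
    show "(?G *\<^sub>v x) $ r = (0\<^sub>v (2 * kk) :: 'a vec) $ r"
    proof (cases "r < kk")
      case True
      have "(?G *\<^sub>v x) $ r = x $ r + (\<Sum>t<?p. M $$ (r, ?s1 ! t) * x $ (kk + t))"
        using Gmat_top[of x M A1 A2 r] xc True kk by simp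
      also have "(\<Sum>t<?p. M $$ (r, ?s1 ! t) * x $ (kk + t)) = (\<Sum>t<?p. if t = t1 then M $$ (r, ?s1 ! t) else 0)"
        by (rule sum.cong) (auto simp: x_def)
      also have "\<dots> = M $$ (r, j)" using t1 by simp
      finally show ?thesis using True r by (simp add: x_def)
    next
      case False
      define a where "a = r - kk"
      have a: "a < kk" "r = kk + a" using False r unfolding a_def by auto
      have "(?G *\<^sub>v x) $ (kk + a) = x $ a + (\<Sum>t<?q. M $$ (a, ?s2 ! t) * x $ (kk + ?p + t))"
        using Gmat_bot[of x M A1 A2 a] xc a kk by simp
      also have "(\<Sum>t<?q. M $$ (a, ?s2 ! t) * x $ (kk + ?p + t)) = (\<Sum>t<?q. if t = t2 then M $$ (a, ?s2 ! t) else 0)"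
        by (rule sum.cong) (use t1 in \<open>auto simp: x_def\<close>)
      also have "\<dots> = M $$ (a, j)" using t2 by simp
      finally show ?thesis using a r by (simp add: x_def)
    qed
  qed (use G in simp)
  have "x $ (kk + t1) = 1" using t1 unfolding x_def by simp
  then have "x \<noteq> 0\<^sub>v (kk + ?p + ?q)" using t1 by auto
  then show False using inj Gx G xc unfolding injm_def by auto
qed


lemma Gmat_inj_indep:
  fixes M :: "'a::field mat"
  assumes M: "M \<in> carrier_mat kk N" and A1: "A1 \<subseteq> {..<N}" and A2: "A2 \<subseteq> {..<N}"
    and inj: "injm (Gmat M [A1, A2])"
  shows "indep_on M (A1 \<union> A2)"
  unfolding indep_on_def
proof (intro ballI impI)
  let ?G = "Gmat M [A1, A2]" and ?p = "card A1" and ?q = "card A2"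
  let ?s1 = "sorted_list_of_set A1" and ?s2 = "sorted_list_of_set A2"
  have d: "A1 \<inter> A2 = {}" by (rule Gmat_inj_disj[OF M A1 A2 inj])
  have kk: "dim_row M = kk" using M by simp
  have G: "?G \<in> carrier_mat (2 * kk) (kk + ?p + ?q)" using Gmat_carrier[of M A1 A2] kk by simp
  have f1: "finite A1" and f2: "finite A2" using A1 A2 finite_subset by blast+
  fix z :: "'a vec" assume zc: "z \<in> carrier_vec (dim_col M)" and zs: "suppd z (A1 \<union> A2)"
    and Mz: "M *\<^sub>v z = 0\<^sub>v (dim_row M)"
  have zc': "z \<in> carrier_vec N" using zc M by simp
  have A12: "A1 \<union> A2 \<subseteq> {..<N}" using A1 A2 by auto
  define x :: "'a vec" where "x = vec (kk + ?p + ?q) (\<lambda>c. if c < kk then - (\<Sum>t<?p. M $$ (c, ?s1 ! t) * z $ (?s1 ! t))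
      else if c < kk + ?p then z $ (?s1 ! (c - kk)) else - z $ (?s2 ! (c - kk - ?p)))"
  have xc: "x \<in> carrier_vec (kk + ?p + ?q)" unfolding x_def by simp
  have Gx: "?G *\<^sub>v x = 0\<^sub>v (2 * kk)"
  proof (rule eq_vecI)
    fix r assume "r < dim_vec (0\<^sub>v (2 * kk) :: 'a vec)"
    then have r: "r < 2 * kk" by simp
    show "(?G *\<^sub>v x) $ r = (0\<^sub>v (2 * kk) :: 'a vec) $ r"
    proof (cases "r < kk")
      case True
      have "(?G *\<^sub>v x) $ r = x $ r + (\<Sum>t<?p. M $$ (r, ?s1 ! t) * x $ (kk + t))"
        using Gmat_top[of x M A1 A2 r] xc True kk by simp
      also have "(\<Sum>t<?p. M $$ (r, ?s1 ! t) * x $ (kk + t)) = (\<Sum>t<?p. M $$ (r, ?s1 ! t) * z $ (?s1 ! t))"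
        by (rule sum.cong) (auto simp: x_def)
      finally show ?thesis using True r by (simp add: x_def)
    next
      case False
      define a where "a = r - kk"
      have a: "a < kk" "r = kk + a" using False r unfolding a_def by auto
      have "(?G *\<^sub>v x) $ (kk + a) = x $ a + (\<Sum>t<?q. M $$ (a, ?s2 ! t) * x $ (kk + ?p + t))"
        using Gmat_bot[of x M A1 A2 a] xc a kk by simp
      also have "(\<Sum>t<?q. M $$ (a, ?s2 ! t) * x $ (kk + ?p + t)) = - (\<Sum>t<?q. M $$ (a, ?s2 ! t) * z $ (?s2 ! t))"
        by (subst sum_negf[symmetric], rule sum.cong) (auto simp: x_def)
      also have "x $ a = - (\<Sum>t<?p. M $$ (a, ?s1 ! t) * z $ (?s1 ! t))" using a by (simp add: x_def)
      also have "(\<Sum>t<?p. M $$ (a, ?s1 ! t) * z $ (?s1 ! t)) = (\<Sum>j\<in>A1. M $$ (a, j) * z $ j)"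
        by (rule reidx[OF f1])
      also have "(\<Sum>t<?q. M $$ (a, ?s2 ! t) * z $ (?s2 ! t)) = (\<Sum>j\<in>A2. M $$ (a, j) * z $ j)"
        by (rule reidx[OF f2])
      also have "- (\<Sum>j\<in>A1. M $$ (a, j) * z $ j) + - (\<Sum>j\<in>A2. M $$ (a, j) * z $ j)
          = - (\<Sum>j\<in>A1 \<union> A2. M $$ (a, j) * z $ j)"
        using sum.union_disjoint[OF f1 f2 d, of "\<lambda>j. M $$ (a, j) * z $ j"] by simp
      also have "(\<Sum>j\<in>A1 \<union> A2. M $$ (a, j) * z $ j) = (\<Sum>j<N. M $$ (a, j) * z $ j)"
        using sum_supp[OF A12 zc' zs, of "\<lambda>j. M $$ (a, j)"] by simp
      also have "\<dots> = (M *\<^sub>v z) $ a" using mult_nth[OF M a(1) zc'] by simp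
      also have "\<dots> = 0" using Mz a kk by simp
      finally show ?thesis using a r by simp
    qed
  qed (use G in simp)
  then have x0: "x = 0\<^sub>v (kk + ?p + ?q)" using inj G xc unfolding injm_def by auto
  have z1: "z $ j = 0" if j: "j \<in> A1" for j
  proof -
    obtain t where t: "t < ?p" "?s1 ! t = j" using sl_inv[OF f1 j] by blast
    have "x $ (kk + t) = z $ j" using t unfolding x_def by simp
    then show ?thesis using x0 t by simp
  qed
  have z2: "z $ j = 0" if j: "j \<in> A2" for j
  proof -
    obtain t where t: "t < ?q" "?s2 ! t = j" using sl_inv[OF f2 j] by blast
    have "x $ (kk + ?p + t) = - z $ j" using t unfolding x_def by simp
    then show ?thesis using x0 t by simp
  qed
  show "z = 0\<^sub>v (dim_col M)"
  proof (rule eq_vecI)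
    fix j assume "j < dim_vec (0\<^sub>v (dim_col M) :: 'a vec)"
    then have j: "j < N" using M by simp
    show "z $ j = (0\<^sub>v (dim_col M) :: 'a vec) $ j"
      using z1 z2 zs j zc' M unfolding suppd_def by (cases "j \<in> A1 \<union> A2") auto
  qed (use zc in simp)
qed


lemma Gmat_surj:
  fixes M :: "'a::field mat"
  assumes M: "M \<in> carrier_mat kk N" and A1: "A1 \<subseteq> {..<N}" and A2: "A2 \<subseteq> {..<N}"
    and sp: "spans_on M (A1 \<union> A2)"
  shows "surjm (Gmat M [A1, A2])"
  unfolding surjm_def
proof
  let ?G = "Gmat M [A1, A2]" and ?p = "card A1" and ?q = "card A2"
  let ?s1 = "sorted_list_of_set A1" and ?s2 = "sorted_list_of_set A2"
  have kk: "dim_row M = kk" using M by simp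
  have G: "?G \<in> carrier_mat (2 * kk) (kk + ?p + ?q)" using Gmat_carrier[of M A1 A2] kk by simp
  have f1: "finite A1" and f2: "finite A2" using A1 A2 finite_subset by blast+
  have A12: "A1 \<union> A2 \<subseteq> {..<N}" using A1 A2 by auto
  fix b :: "'a vec" assume b: "b \<in> carrier_vec (dim_row ?G)"
  define d :: "'a vec" where "d = vec kk (\<lambda>r. b $ r - b $ (kk + r))"
  obtain z where zc: "z \<in> carrier_vec N" and zs: "suppd z (A1 \<union> A2)" and Mz: "M *\<^sub>v z = d"
    using sp M unfolding spans_on_def d_def by fastforce
  define x :: "'a vec" where "x = vec (kk + ?p + ?q) (\<lambda>c. if c < kk then b $ c - (\<Sum>t<?p. M $$ (c, ?s1 ! t) * z $ (?s1 ! t))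
      else if c < kk + ?p then z $ (?s1 ! (c - kk))
      else - (if ?s2 ! (c - kk - ?p) \<in> A1 then 0 else z $ (?s2 ! (c - kk - ?p))))"
  have xc: "x \<in> carrier_vec (kk + ?p + ?q)" unfolding x_def by simp
  have Gx: "?G *\<^sub>v x = b"
  proof (rule eq_vecI)
    fix r assume "r < dim_vec b"
    then have r: "r < 2 * kk" using b G by simp
    show "(?G *\<^sub>v x) $ r = b $ r"
    proof (cases "r < kk")
      case True
      have "(?G *\<^sub>v x) $ r = x $ r + (\<Sum>t<?p. M $$ (r, ?s1 ! t) * x $ (kk + t))"
        using Gmat_top[of x M A1 A2 r] xc True kk by simp
      also have "(\<Sum>t<?p. M $$ (r, ?s1 ! t) * x $ (kk + t)) = (\<Sum>t<?p. M $$ (r, ?s1 ! t) * z $ (?s1 ! t))"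
        by (rule sum.cong) (auto simp: x_def)
      finally show ?thesis using True r by (simp add: x_def)
    next
      case False
      define a where "a = r - kk"
      have a: "a < kk" "r = kk + a" using False r unfolding a_def by auto
      let ?w = "\<lambda>j. if j \<in> A1 then 0 else z $ j"
      have "(?G *\<^sub>v x) $ (kk + a) = x $ a + (\<Sum>t<?q. M $$ (a, ?s2 ! t) * x $ (kk + ?p + t))"
        using Gmat_bot[of x M A1 A2 a] xc a kk by simp
      also have "(\<Sum>t<?q. M $$ (a, ?s2 ! t) * x $ (kk + ?p + t)) = - (\<Sum>t<?q. M $$ (a, ?s2 ! t) * ?w (?s2 ! t))"
        by (subst sum_negf[symmetric], rule sum.cong) (auto simp: x_def)
      also have "x $ a = b $ a - (\<Sum>t<?p. M $$ (a, ?s1 ! t) * z $ (?s1 ! t))" using a by (simp add: x_def)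
      also have "(\<Sum>t<?p. M $$ (a, ?s1 ! t) * z $ (?s1 ! t)) = (\<Sum>j\<in>A1. M $$ (a, j) * z $ j)"
        by (rule reidx[OF f1])
      also have "(\<Sum>t<?q. M $$ (a, ?s2 ! t) * ?w (?s2 ! t)) = (\<Sum>j\<in>A2. M $$ (a, j) * ?w j)"
        by (rule reidx[OF f2])
      also have "\<dots> = (\<Sum>j\<in>A2 - A1. M $$ (a, j) * ?w j)"
        by (rule sum.mono_neutral_right) (use f2 in auto)
      also have "\<dots> = (\<Sum>j\<in>A2 - A1. M $$ (a, j) * z $ j)"
        by (rule sum.cong) auto
      also have "b $ a - (\<Sum>j\<in>A1. M $$ (a, j) * z $ j) + - (\<Sum>j\<in>A2 - A1. M $$ (a, j) * z $ j)
          = b $ a - ((\<Sum>j\<in>A1. M $$ (a, j) * z $ j) + (\<Sum>j\<in>A2 - A1. M $$ (a, j) * z $ j))"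
        by simp
      also have "(\<Sum>j\<in>A1. M $$ (a, j) * z $ j) + (\<Sum>j\<in>A2 - A1. M $$ (a, j) * z $ j)
          = (\<Sum>j\<in>A1 \<union> A2. M $$ (a, j) * z $ j)"
        using sum.union_disjoint[of A1 "A2 - A1" "\<lambda>j. M $$ (a, j) * z $ j"] f1 f2 by (simp add: Un_Diff_cancel)
      also have "(\<Sum>j\<in>A1 \<union> A2. M $$ (a, j) * z $ j) = (\<Sum>j<N. M $$ (a, j) * z $ j)"
        using sum_supp[OF A12 zc zs, of "\<lambda>j. M $$ (a, j)"] by simp
      also have "\<dots> = (M *\<^sub>v z) $ a" using mult_nth[OF M a(1) zc] by simp
      also have "\<dots> = b $ a - b $ (kk + a)" using Mz a unfolding d_def by simp
      finally show ?thesis using a r by simp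
    qed
  qed (use G b xc in simp)
  then show "\<exists>v\<in>carrier_vec (dim_col ?G). ?G *\<^sub>v v = b" using xc G by auto
qed

lemma Gmat_surj_spans:
  fixes M :: "'a::field mat"
  assumes M: "M \<in> carrier_mat kk N" and A1: "A1 \<subseteq> {..<N}" and A2: "A2 \<subseteq> {..<N}"
    and sj: "surjm (Gmat M [A1, A2])"
  shows "spans_on M (A1 \<union> A2)"
  unfolding spans_on_def
proof
  let ?G = "Gmat M [A1, A2]" and ?p = "card A1" and ?q = "card A2"
  let ?s1 = "sorted_list_of_set A1" and ?s2 = "sorted_list_of_set A2"
  have kk: "dim_row M = kk" using M by simp
  have G: "?G \<in> carrier_mat (2 * kk) (kk + ?p + ?q)" using Gmat_carrier[of M A1 A2] kk by simp
  fix b :: "'a vec" assume b: "b \<in> carrier_vec (dim_row M)"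
  define bb :: "'a vec" where "bb = vec (2 * kk) (\<lambda>r. if r < kk then b $ r else 0)"
  obtain x where xc: "x \<in> carrier_vec (kk + ?p + ?q)" and Gx: "?G *\<^sub>v x = bb"
    using sj G unfolding surjm_def bb_def by fastforce
  have top: "x $ r + (\<Sum>t<?p. M $$ (r, ?s1 ! t) * x $ (kk + t)) = b $ r" if r: "r < kk" for r
    using Gmat_top[of x M A1 A2 r] xc r kk arg_cong[OF Gx, of "\<lambda>v. v $ r"] by (simp add: bb_def)
  have bot: "x $ a + (\<Sum>t<?q. M $$ (a, ?s2 ! t) * x $ (kk + ?p + t)) = 0" if a: "a < kk" for a
    using Gmat_bot[of x M A1 A2 a] xc a kk arg_cong[OF Gx, of "\<lambda>v. v $ (kk + a)"] by (simp add: bb_def)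
  define y1 where "y1 = vec ?p (\<lambda>t. x $ (kk + t))"
  define y2 where "y2 = vec ?q (\<lambda>t. x $ (kk + ?p + t))"
  define z where "z = extv N A1 y1 - extv N A2 y2"
  have zc: "z \<in> carrier_vec N" unfolding z_def by simp
  have zs: "suppd z (A1 \<union> A2)" unfolding suppd_def z_def by (auto simp: extv_out)
  have Mz: "M *\<^sub>v z = b"
  proof (rule eq_vecI)
    fix r assume "r < dim_vec b"
    then have r: "r < kk" using b kk by simp
    have "M *\<^sub>v z = M *\<^sub>v extv N A1 y1 - M *\<^sub>v extv N A2 y2"
      unfolding z_def by (rule mult_minus_distrib_mat_vec[OF M]) auto
    also have "\<dots> = subm M A1 *\<^sub>v y1 - subm M A2 *\<^sub>v y2"
      using M_extv[OF M A1, of y1] M_extv[OF M A2, of y2] by (simp add: y1_def y2_def)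
    finally have "(M *\<^sub>v z) $ r = (subm M A1 *\<^sub>v y1) $ r - (subm M A2 *\<^sub>v y2) $ r"
      using r M by simp
    also have "(subm M A1 *\<^sub>v y1) $ r = (\<Sum>t<?p. M $$ (r, ?s1 ! t) * y1 $ t)"
      by (rule subm_mult_nth) (use r kk in \<open>auto simp: y1_def\<close>)
    also have "\<dots> = (\<Sum>t<?p. M $$ (r, ?s1 ! t) * x $ (kk + t))"
      by (rule sum.cong) (auto simp: y1_def)
    also have "(subm M A2 *\<^sub>v y2) $ r = (\<Sum>t<?q. M $$ (r, ?s2 ! t) * y2 $ t)"
      by (rule subm_mult_nth) (use r kk in \<open>auto simp: y2_def\<close>)
    also have "\<dots> = (\<Sum>t<?q. M $$ (r, ?s2 ! t) * x $ (kk + ?p + t))"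
      by (rule sum.cong) (auto simp: y2_def)
    also have "(\<Sum>t<?p. M $$ (r, ?s1 ! t) * x $ (kk + t)) - (\<Sum>t<?q. M $$ (r, ?s2 ! t) * x $ (kk + ?p + t)) = b $ r"
    proof -
      have e1: "(\<Sum>t<?p. M $$ (r, ?s1 ! t) * x $ (kk + t)) = b $ r - x $ r"
        using top[OF r] by (simp add: eq_diff_eq add.commute)
      have e2: "(\<Sum>t<?q. M $$ (r, ?s2 ! t) * x $ (kk + ?p + t)) = - x $ r"
        using bot[OF r] by (simp add: eq_neg_iff_add_eq_0 add.commute)
      show ?thesis unfolding e1 e2 by simp
    qed
    finally show "(M *\<^sub>v z) $ r = b $ r" .
  qed (use M b in simp)
  show "\<exists>x\<in>carrier_vec (dim_col M). suppd x (A1 \<union> A2) \<and> M *\<^sub>v x = b"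
    using zc zs Mz M by auto
qed

lemma Gmat_injm_iff:
  fixes M :: "'a::field mat"
  assumes M: "M \<in> carrier_mat kk N" and A1: "A1 \<subseteq> {..<N}" and A2: "A2 \<subseteq> {..<N}"
  shows "full_col_rank (Gmat M [A1, A2]) \<longleftrightarrow> A1 \<inter> A2 = {} \<and> indep_on M (A1 \<union> A2)"
  unfolding full_col_rank_iff_injm
  using Gmat_inj[OF M A1 A2] Gmat_inj_disj[OF M A1 A2] Gmat_inj_indep[OF M A1 A2] by blast

lemma saturated_iff:
  fixes M :: "'a::field mat"
  assumes M: "M \<in> carrier_mat kk N" and A1: "A1 \<subseteq> {..<N}" and A2: "A2 \<subseteq> {..<N}"
  shows "saturated M [A1, A2] \<longleftrightarrow> spans_on M (A1 \<union> A2)"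
proof -
  have "saturated M [A1, A2] \<longleftrightarrow> mrank (Gmat M [A1, A2]) = dim_row (Gmat M [A1, A2])"
    unfolding saturated_def using Gmat_carrier[of M A1 A2] by (simp add: mult_2 mult_2_right)
  also have "\<dots> \<longleftrightarrow> surjm (Gmat M [A1, A2])" by (rule mrank_row_iff_surjm)
  finally show ?thesis using Gmat_surj[OF M A1 A2] Gmat_surj_spans[OF M A1 A2] by blast
qed

lemma ortho:
  fixes A :: "'a::comm_ring_1 mat"
  assumes A: "A \<in> carrier_mat m c" and w: "w \<in> carrier_vec c" and y: "y \<in> carrier_vec m"
  shows "(\<Sum>r<m. (A *\<^sub>v w) $ r * y $ r) = (\<Sum>l<c. w $ l * (\<Sum>r<m. A $$ (r, l) * y $ r))"
proof -
  have "(\<Sum>r<m. (A *\<^sub>v w) $ r * y $ r) = (\<Sum>r<m. (\<Sum>l<c. A $$ (r, l) * w $ l) * y $ r)"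
    by (rule sum.cong) (use mult_nth[OF A _ w] in auto)
  also have "\<dots> = (\<Sum>r<m. \<Sum>l<c. w $ l * (A $$ (r, l) * y $ r))"
    by (auto simp: sum_distrib_right sum_distrib_left ac_simps intro!: sum.cong)
  also have "\<dots> = (\<Sum>l<c. \<Sum>r<m. w $ l * (A $$ (r, l) * y $ r))" by (rule sum.swap)
  also have "\<dots> = (\<Sum>l<c. w $ l * (\<Sum>r<m. A $$ (r, l) * y $ r))"
    by (simp add: sum_distrib_left)
  finally show ?thesis .
qed

lemma transpose_nth:
  fixes A :: "'a::comm_ring_1 mat"
  assumes A: "A \<in> carrier_mat m c" and l: "l < c" and y: "y \<in> carrier_vec m"
  shows "(transpose_mat A *\<^sub>v y) $ l = (\<Sum>r<m. A $$ (r, l) * y $ r)"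
proof -
  have At: "transpose_mat A \<in> carrier_mat c m" using A by simp
  show ?thesis using mult_nth[OF At l y] A l by simp
qed

lemma mult_unit:
  fixes A :: "'a::comm_ring_1 mat"
  assumes A: "A \<in> carrier_mat m c" and j: "j < c"
  shows "A *\<^sub>v unit_vec c j = col A j"
proof (rule eq_vecI)
  fix r assume "r < dim_vec (col A j)"
  then have r: "r < m" using A by simp
  have "(A *\<^sub>v unit_vec c j) $ r = (\<Sum>l<c. A $$ (r, l) * unit_vec c j $ l)"
    using mult_nth[OF A r] by simp
  also have "\<dots> = (\<Sum>l<c. if l = j then A $$ (r, j) else 0)"
    by (rule sum.cong) (auto simp: unit_vec_def)
  also have "\<dots> = A $$ (r, j)" using j by simp
  finally show "(A *\<^sub>v unit_vec c j) $ r = col A j $ r" using A r j by simp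
qed (use A in simp)

lemma LT:
  fixes A :: "'a::field mat"
  assumes A: "A \<in> carrier_mat m c" and inj: "injm (transpose_mat A)"
  shows "surjm A"
proof -
  let ?P = "\<lambda>J. J \<subseteq> {..<c} \<and> indep_on A J"
  have P0: "?P {}" unfolding indep_on_def suppd_def
    by (auto intro!: eq_vecI)
  have "\<forall>y. ?P y \<longrightarrow> card y < Suc c"
    using card_mono[of "{..<c}"] by (metis card_lessThan finite_lessThan le_imp_less_Suc)
  from ex_has_greatest_nat[OF P0 this] obtain J where PJ: "?P J"
    and mx: "\<And>J'. ?P J' \<Longrightarrow> card J' \<le> card J" by blast
  have Jc: "J \<subseteq> {..<c}" and iJ: "indep_on A J" using PJ by auto
  have fJ: "finite J" using Jc finite_subset by blast
  have colJ: "\<exists>w\<in>carrier_vec c. suppd w J \<and> A *\<^sub>v w = col A j" if j: "j < c" for j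
  proof (cases "j \<in> J")
    case True
    show ?thesis
      by (rule bexI[of _ "unit_vec c j"]) (use True j mult_unit[OF A j] in \<open>auto simp: suppd_def unit_vec_def\<close>)
  next
    case False
    have "card (insert j J) > card J" using False fJ by simp
    then have "\<not> indep_on A (insert j J)" using mx[of "insert j J"] Jc j by auto
    then obtain x where xc: "x \<in> carrier_vec c" and xs: "suppd x (insert j J)"
      and Ax: "A *\<^sub>v x = 0\<^sub>v m" and xnz: "x \<noteq> 0\<^sub>v c"
      unfolding indep_on_def using A by auto
    have xj: "x $ j \<noteq> 0"
    proof
      assume "x $ j = 0"
      then have "suppd x J" using xs unfolding suppd_def by auto
      then show False using iJ xc Ax xnz A unfolding indep_on_def by auto
    qed
    define w where "w = unit_vec c j - (1 / x $ j) \<cdot>\<^sub>v x"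
    have wc: "w \<in> carrier_vec c" unfolding w_def using xc by simp
    have "A *\<^sub>v w = A *\<^sub>v unit_vec c j - A *\<^sub>v ((1 / x $ j) \<cdot>\<^sub>v x)"
      unfolding w_def by (rule mult_minus_distrib_mat_vec[OF A]) (use xc in auto)
    also have "A *\<^sub>v ((1 / x $ j) \<cdot>\<^sub>v x) = 0\<^sub>v m"
      using mult_mat_vec[OF A xc] Ax by (auto intro!: eq_vecI)
    finally have Aw0: "A *\<^sub>v w = col A j - 0\<^sub>v m" using mult_unit[OF A j] A by simp
    have "col A j - 0\<^sub>v m = col A j" by (rule eq_vecI) (use A in auto)
    then have Aw: "A *\<^sub>v w = col A j" using Aw0 by simp
    have ws: "suppd w J" unfolding suppd_def
    proof (intro allI impI)
      fix l assume l: "l < dim_vec w" and lJ: "l \<notin> J"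
      then have lc: "l < c" using wc by simp
      show "w $ l = 0"
      proof (cases "l = j")
        case True then show ?thesis using xj lc unfolding w_def using xc by simp
      next
        case F: False
        then have "x $ l = 0" using xs lJ lc xc unfolding suppd_def by auto
        then show ?thesis using F lc xc j unfolding w_def by simp
      qed
    qed
    show ?thesis using wc ws Aw by blast
  qed
  have sJ: "injm (subm A J)" using indep_on_iff[OF A Jc] iJ by simp
  have cJ: "card J \<le> m" using injm_bound[OF sJ] A by simp
  show ?thesis
  proof (cases "card J = m")
    case True
    then have "surjm (subm A J)" using injm_square_surjm[OF _ sJ] A by simp
    then have "spans_on A J" using spans_on_iff[OF A Jc] by simp
    then have sp: "\<forall>b\<in>carrier_vec (dim_row A). \<exists>x\<in>carrier_vec (dim_col A). suppd x J \<and> A *\<^sub>v x = b"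
      unfolding spans_on_def .
    show ?thesis unfolding surjm_def
    proof
      fix b :: "'a vec" assume b: "b \<in> carrier_vec (dim_row A)"
      from bspec[OF sp b] obtain x where "x \<in> carrier_vec (dim_col A)" "A *\<^sub>v x = b" by blast
      then show "\<exists>v\<in>carrier_vec (dim_col A). A *\<^sub>v v = b" by blast
    qed
  next
    case False
    then have lt: "card J < m" using cJ by simp
    let ?B = "transpose_mat (subm A J)"
    have nB: "\<not> injm ?B"
    proof
      assume "injm ?B"
      then have "dim_col ?B \<le> dim_row ?B" by (rule injm_bound)
      then show False using lt A by simp
    qed
    have "\<exists>y\<in>carrier_vec m. ?B *\<^sub>v y = 0\<^sub>v (card J) \<and> y \<noteq> 0\<^sub>v m"
      using nB A unfolding injm_def by simp
    then obtain y :: "'a vec" where yc: "y \<in> carrier_vec m" and By: "?B *\<^sub>v y = 0\<^sub>v (card J)"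
      and ynz: "y \<noteq> 0\<^sub>v m" by blast
    have oJ: "(\<Sum>r<m. A $$ (r, l) * y $ r) = 0" if l: "l \<in> J" for l
    proof -
      obtain t where t: "t < card J" "sorted_list_of_set J ! t = l" using sl_inv[OF fJ l] by blast
      have sA: "subm A J \<in> carrier_mat m (card J)" using A unfolding carrier_mat_def by simp
      have "(?B *\<^sub>v y) $ t = (\<Sum>r<m. subm A J $$ (r, t) * y $ r)"
        by (rule transpose_nth[OF sA t(1) yc])
      also have "\<dots> = (\<Sum>r<m. A $$ (r, l) * y $ r)"
        by (rule sum.cong) (use A t in \<open>auto simp: subm_def\<close>)
      finally show ?thesis using By t by simp
    qed
    have oall: "(\<Sum>r<m. A $$ (r, j) * y $ r) = 0" if j: "j < c" for j
    proof -
      obtain w where wc: "w \<in> carrier_vec c" and ws: "suppd w J" and Aw: "A *\<^sub>v w = col A j"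
        using colJ[OF j] by blast
      have "(\<Sum>r<m. A $$ (r, j) * y $ r) = (\<Sum>r<m. (A *\<^sub>v w) $ r * y $ r)"
        by (rule sum.cong) (use Aw A j in auto)
      also have "\<dots> = (\<Sum>l<c. w $ l * (\<Sum>r<m. A $$ (r, l) * y $ r))" by (rule ortho[OF A wc yc])
      also have "\<dots> = 0"
        by (rule sum.neutral) (use ws wc oJ in \<open>auto simp: suppd_def\<close>)
      finally show ?thesis .
    qed
    have "transpose_mat A *\<^sub>v y = 0\<^sub>v c"
    proof (rule eq_vecI)
      fix j assume "j < dim_vec (0\<^sub>v c :: 'a vec)"
      then have j: "j < c" by simp
      show "(transpose_mat A *\<^sub>v y) $ j = (0\<^sub>v c :: 'a vec) $ j"
        using transpose_nth[OF A j yc] oall[OF j] j by simp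
    qed (use A in simp)
    then have "y = 0\<^sub>v m" using inj yc A unfolding injm_def by auto
    then show ?thesis using ynz by simp
  qed
qed

lemma mult_zero_vec_right:
  fixes A :: "'a::comm_ring_1 mat"
  assumes A: "A \<in> carrier_mat m c"
  shows "A *\<^sub>v 0\<^sub>v c = 0\<^sub>v m"
proof (rule eq_vecI)
  fix r assume "r < dim_vec (0\<^sub>v m :: 'a vec)"
  then have r: "r < m" by simp
  show "(A *\<^sub>v 0\<^sub>v c) $ r = (0\<^sub>v m :: 'a vec) $ r" using mult_nth[OF A r, of "0\<^sub>v c"] r by simp
qed (use A in simp)

lemma dual_inj:
  fixes H :: "'a::field mat"
  assumes H: "H \<in> carrier_mat h n" and sH: "surjm H"
  shows "injm (transpose_mat H)"
  unfolding injm_def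
proof (intro ballI impI)
  fix y :: "'a vec" assume yc0: "y \<in> carrier_vec (dim_col (transpose_mat H))"
    and Hy0: "transpose_mat H *\<^sub>v y = 0\<^sub>v (dim_row (transpose_mat H))"
  have yc: "y \<in> carrier_vec h" using yc0 H by simp
  have Hy: "transpose_mat H *\<^sub>v y = 0\<^sub>v n" using Hy0 H by simp
  show "y = 0\<^sub>v (dim_col (transpose_mat H))"
  proof (rule eq_vecI)
    fix i assume "i < dim_vec (0\<^sub>v (dim_col (transpose_mat H)) :: 'a vec)"
    then have i: "i < h" using H by simp
    have "unit_vec h i \<in> carrier_vec (dim_row H)" using H by simp
    then obtain w where wc: "w \<in> carrier_vec n" and Hw: "H *\<^sub>v w = unit_vec h i"
      using sH H unfolding surjm_def by fastforce
    have "y $ i = (\<Sum>r<h. (if r = i then y $ r else 0))" using i by simp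
    also have "\<dots> = (\<Sum>r<h. (H *\<^sub>v w) $ r * y $ r)"
      by (rule sum.cong) (use Hw i in auto)
    also have "\<dots> = (\<Sum>l<n. w $ l * (\<Sum>r<h. H $$ (r, l) * y $ r))" by (rule ortho[OF H wc yc])
    also have "\<dots> = (\<Sum>l<n. w $ l * (transpose_mat H *\<^sub>v y) $ l)"
      by (rule sum.cong) (use transpose_nth[OF H _ yc] in auto)
    also have "\<dots> = 0" using Hy by simp
    finally show "y $ i = (0\<^sub>v (dim_col (transpose_mat H)) :: 'a vec) $ i" using i H by simp
  qed (use yc H in simp)
qed

lemma GEN:
  fixes A :: "'a::field mat"
  assumes A: "A \<in> carrier_mat m c" and B: "B \<in> carrier_mat c p" and AB: "A * B = 0\<^sub>m m p"
    and sA: "surjm A" and iB: "injm B" and cp: "p + m = c"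
    and x: "x \<in> carrier_vec c" and Ax: "A *\<^sub>v x = 0\<^sub>v m"
  shows "\<exists>w\<in>carrier_vec p. x = B *\<^sub>v w"
proof -
  have "\<forall>i. \<exists>u. i < m \<longrightarrow> u \<in> carrier_vec c \<and> A *\<^sub>v u = unit_vec m i"
  proof (intro allI)
    fix i
    show "\<exists>u. i < m \<longrightarrow> u \<in> carrier_vec c \<and> A *\<^sub>v u = unit_vec m i"
    proof (cases "i < m")
      case True
      have "unit_vec m i \<in> carrier_vec (dim_row A)" using A by simp
      then obtain u where "u \<in> carrier_vec (dim_col A)" "A *\<^sub>v u = unit_vec m i"
        using sA unfolding surjm_def by blast
      then show ?thesis using A by auto
    qed simp
  qed
  then obtain u where u: "\<And>i. i < m \<Longrightarrow> u i \<in> carrier_vec c \<and> A *\<^sub>v u i = unit_vec m i"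
    by metis
  define U :: "'a mat" where "U = mat c m (\<lambda>(r, i). u i $ r)"
  have U: "U \<in> carrier_mat c m" unfolding U_def by simp
  have colU: "col U i = u i" if i: "i < m" for i
    using u[OF i] i unfolding U_def by (auto intro!: eq_vecI)
  have AU: "A * U = 1\<^sub>m m"
  proof (rule eq_matI)
    fix i j assume i: "i < dim_row (1\<^sub>m m :: 'a mat)" and j: "j < dim_col (1\<^sub>m m :: 'a mat)"
    have "(A * U) $$ (i, j) = row A i \<bullet> col U j" using A U i j by simp
    also have "\<dots> = (A *\<^sub>v u j) $ i" using colU[of j] A i j by simp
    also have "\<dots> = unit_vec m j $ i" using u[of j] j by simp
    finally show "(A * U) $$ (i, j) = (1\<^sub>m m :: 'a mat) $$ (i, j)" using i j by simp
  qed (use A U in auto)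
  define C :: "'a mat" where "C = mat c c (\<lambda>(r, j). if j < p then B $$ (r, j) else U $$ (r, j - p))"
  have C: "C \<in> carrier_mat c c" unfolding C_def by simp
  let ?v1 = "\<lambda>v :: 'a vec. vec p (\<lambda>j. v $ j)" and ?v2 = "\<lambda>v :: 'a vec. vec m (\<lambda>i. v $ (p + i))"
  have Cmult: "C *\<^sub>v v = B *\<^sub>v ?v1 v + U *\<^sub>v ?v2 v" if v: "v \<in> carrier_vec c" for v
  proof (rule eq_vecI)
    fix r assume "r < dim_vec (B *\<^sub>v ?v1 v + U *\<^sub>v ?v2 v)"
    then have r: "r < c" using U by simp
    have "(C *\<^sub>v v) $ r = (\<Sum>j<p + m. C $$ (r, j) * v $ j)" using mult_nth[OF C r v] cp by simp
    also have "\<dots> = (\<Sum>j<p. C $$ (r, j) * v $ j) + (\<Sum>i<m. C $$ (r, p + i) * v $ (p + i))"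
      by (rule sum_split_add)
    also have "(\<Sum>j<p. C $$ (r, j) * v $ j) = (B *\<^sub>v ?v1 v) $ r"
      using mult_nth[OF B r, of "?v1 v"] r cp by (auto simp: C_def intro!: sum.cong)
    also have "(\<Sum>i<m. C $$ (r, p + i) * v $ (p + i)) = (U *\<^sub>v ?v2 v) $ r"
      using mult_nth[OF U r, of "?v2 v"] r cp by (auto simp: C_def intro!: sum.cong)
    finally show "(C *\<^sub>v v) $ r = (B *\<^sub>v ?v1 v + U *\<^sub>v ?v2 v) $ r" using r B U by simp
  qed (use C B U in simp)
  have AC: "A *\<^sub>v (C *\<^sub>v v) = ?v2 v" if v: "v \<in> carrier_vec c" for v
  proof -
    have "A *\<^sub>v (C *\<^sub>v v) = A *\<^sub>v (B *\<^sub>v ?v1 v) + A *\<^sub>v (U *\<^sub>v ?v2 v)"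
      unfolding Cmult[OF v] by (rule mult_add_distrib_mat_vec[OF A]) (use B U in auto)
    also have "A *\<^sub>v (B *\<^sub>v ?v1 v) = (A * B) *\<^sub>v ?v1 v"
      by (rule assoc_mult_mat_vec[symmetric, OF A B]) simp
    also have "\<dots> = 0\<^sub>v m" unfolding AB by (auto intro!: eq_vecI)
    also have "A *\<^sub>v (U *\<^sub>v ?v2 v) = (A * U) *\<^sub>v ?v2 v"
      by (rule assoc_mult_mat_vec[symmetric, OF A U]) simp
    also have "\<dots> = ?v2 v" unfolding AU by simp
    finally show ?thesis by (auto intro!: eq_vecI)
  qed
  have iC: "injm C" unfolding injm_def
  proof (intro ballI impI)
    fix v :: "'a vec" assume vc0: "v \<in> carrier_vec (dim_col C)" and Cv0: "C *\<^sub>v v = 0\<^sub>v (dim_row C)"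
    have vc: "v \<in> carrier_vec c" and Cv: "C *\<^sub>v v = 0\<^sub>v c" using vc0 Cv0 C by auto
    have v2: "?v2 v = 0\<^sub>v m" using AC[OF vc] Cv mult_zero_vec_right[OF A] by simp
    have "U *\<^sub>v ?v2 v = 0\<^sub>v c" unfolding v2 using U by (auto intro!: eq_vecI)
    then have "B *\<^sub>v ?v1 v = 0\<^sub>v c" using Cmult[OF vc] Cv B by (auto intro!: eq_vecI)
    then have v1: "?v1 v = 0\<^sub>v p" using iB B unfolding injm_def by auto
    show "v = 0\<^sub>v (dim_col C)"
    proof (rule eq_vecI)
      fix j assume "j < dim_vec (0\<^sub>v (dim_col C) :: 'a vec)"
      then have j: "j < c" using C by simp
      show "v $ j = (0\<^sub>v (dim_col C) :: 'a vec) $ j"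
      proof (cases "j < p")
        case True then show ?thesis using arg_cong[OF v1, of "\<lambda>w. w $ j"] j C by simp
      next
        case False
        then have "p + (j - p) = j" by simp
        then show ?thesis using arg_cong[OF v2, of "\<lambda>w. w $ (j - p)"] j C cp False by simp
      qed
    qed (use vc C in simp)
  qed
  have sC: "surjm C" by (rule injm_square_surjm) (use C iC in auto)
  obtain v where vc: "v \<in> carrier_vec c" and Cv: "C *\<^sub>v v = x"
    using sC C x unfolding surjm_def by fastforce
  have v2: "?v2 v = 0\<^sub>v m" using AC[OF vc] Cv Ax by simp
  have "U *\<^sub>v ?v2 v = 0\<^sub>v c" unfolding v2 using U by (auto intro!: eq_vecI)
  then have "x = B *\<^sub>v ?v1 v" using Cmult[OF vc] Cv B by (auto intro!: eq_vecI)
  then show ?thesis by auto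
qed


lemma dual_Y:
  fixes V H :: "'a::field mat"
  assumes V: "V \<in> carrier_mat k n" and H: "H \<in> carrier_mat h n" and hk: "h + k = n"
    and sV: "surjm V" and sH: "surjm H" and VH: "V * transpose_mat H = 0\<^sub>m k h"
    and T: "T \<subseteq> {..<n}" and sp: "spans_on H ({..<n} - T)"
  shows "indep_on V T"
  unfolding indep_on_def
proof (intro ballI impI)
  fix x :: "'a vec" assume xc0: "x \<in> carrier_vec (dim_col V)" and xs: "suppd x T"
    and Vx0: "V *\<^sub>v x = 0\<^sub>v (dim_row V)"
  have xc: "x \<in> carrier_vec n" and Vx: "V *\<^sub>v x = 0\<^sub>v k" using xc0 Vx0 V by auto
  have Ht: "transpose_mat H \<in> carrier_mat n h" using H by simp
  obtain w where wc: "w \<in> carrier_vec h" and xw: "x = transpose_mat H *\<^sub>v w"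
    using GEN[OF V Ht VH sV dual_inj[OF H sH] hk xc Vx] by blast
  have w0: "w = 0\<^sub>v h"
  proof (rule eq_vecI)
    fix i assume "i < dim_vec (0\<^sub>v h :: 'a vec)"
    then have i: "i < h" by simp
    have "unit_vec h i \<in> carrier_vec (dim_row H)" using H by simp
    then obtain z where zc: "z \<in> carrier_vec n" and zs: "suppd z ({..<n} - T)" and Hz: "H *\<^sub>v z = unit_vec h i"
      using sp H unfolding spans_on_def by fastforce
    have "w $ i = (\<Sum>r<h. (if r = i then w $ r else 0))" using i by simp
    also have "\<dots> = (\<Sum>r<h. (H *\<^sub>v z) $ r * w $ r)"
      by (rule sum.cong) (use Hz i in auto)
    also have "\<dots> = (\<Sum>l<n. z $ l * (\<Sum>r<h. H $$ (r, l) * w $ r))" by (rule ortho[OF H zc wc])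
    also have "\<dots> = (\<Sum>l<n. z $ l * x $ l)"
      by (rule sum.cong) (use transpose_nth[OF H _ wc] xw in auto)
    also have "\<dots> = 0"
    proof (rule sum.neutral, intro ballI)
      fix l assume "l \<in> {..<n}"
      then have l: "l < n" by simp
      show "z $ l * x $ l = 0"
      proof (cases "l \<in> T")
        case True then have "z $ l = 0" using zs l zc unfolding suppd_def by auto
        then show ?thesis by simp
      next
        case False then have "x $ l = 0" using xs l xc unfolding suppd_def by auto
        then show ?thesis by simp
      qed
    qed
    finally show "w $ i = (0\<^sub>v h :: 'a vec) $ i" using i by simp
  qed (use wc in simp)
  show "x = 0\<^sub>v (dim_col V)" using xw w0 mult_zero_vec_right[OF Ht] V by simp
qed

lemma dual_X:
  fixes V H :: "'a::field mat"
  assumes V: "V \<in> carrier_mat k n" and H: "H \<in> carrier_mat h n"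
    and sH: "surjm H" and VH: "V * transpose_mat H = 0\<^sub>m k h"
    and T: "T \<subseteq> {..<n}" and ind: "indep_on V T"
  shows "spans_on H ({..<n} - T)"
proof -
  let ?S = "{..<n} - T"
  have S: "?S \<subseteq> {..<n}" by auto
  have fS: "finite ?S" by simp
  have sub: "subm H ?S \<in> carrier_mat h (card ?S)" using H unfolding carrier_mat_def by simp
  have Ht: "transpose_mat H \<in> carrier_mat n h" using H by simp
  have "injm (transpose_mat (subm H ?S))" unfolding injm_def
  proof (intro ballI impI)
    fix y :: "'a vec" assume yc0: "y \<in> carrier_vec (dim_col (transpose_mat (subm H ?S)))"
      and Sy0: "transpose_mat (subm H ?S) *\<^sub>v y = 0\<^sub>v (dim_row (transpose_mat (subm H ?S)))"
    have yc: "y \<in> carrier_vec h" using yc0 H by simp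
    have Sy: "transpose_mat (subm H ?S) *\<^sub>v y = 0\<^sub>v (card ?S)" using Sy0 by simp
    have oS: "(\<Sum>r<h. H $$ (r, l) * y $ r) = 0" if l: "l \<in> ?S" for l
    proof -
      obtain t where t: "t < card ?S" "sorted_list_of_set ?S ! t = l" using sl_inv[OF fS l] by blast
      have "(transpose_mat (subm H ?S) *\<^sub>v y) $ t = (\<Sum>r<h. subm H ?S $$ (r, t) * y $ r)"
        by (rule transpose_nth[OF sub t(1) yc])
      also have "\<dots> = (\<Sum>r<h. H $$ (r, l) * y $ r)"
        by (rule sum.cong) (use H t in \<open>auto simp: subm_def\<close>)
      finally show ?thesis using Sy t by simp
    qed
    define x where "x = transpose_mat H *\<^sub>v y"
    have xc: "x \<in> carrier_vec n" unfolding x_def by (rule mult_mat_vec_carrier[OF Ht yc])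
    have xl: "x $ l = (\<Sum>r<h. H $$ (r, l) * y $ r)" if "l < n" for l
      unfolding x_def by (rule transpose_nth[OF H that yc])
    have xs: "suppd x T" unfolding suppd_def
    proof (intro allI impI)
      fix l assume "l < dim_vec x" "l \<notin> T"
      then have "l \<in> ?S" "l < n" using xc by auto
      then show "x $ l = 0" using xl oS by simp
    qed
    have "V *\<^sub>v x = (V * transpose_mat H) *\<^sub>v y"
      unfolding x_def by (rule assoc_mult_mat_vec[symmetric, OF V Ht yc])
    also have "\<dots> = 0\<^sub>v k" unfolding VH
    proof (rule eq_vecI)
      fix i assume "i < dim_vec (0\<^sub>v k :: 'a vec)"
      then have i: "i < k" by simp
      show "(0\<^sub>m k h *\<^sub>v y) $ i = (0\<^sub>v k :: 'a vec) $ i"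
        using mult_nth[OF zero_carrier_mat i yc] i by simp
    qed simp
    finally have Vx: "V *\<^sub>v x = 0\<^sub>v k" .
    have "\<forall>x\<in>carrier_vec n. suppd x T \<longrightarrow> V *\<^sub>v x = 0\<^sub>v k \<longrightarrow> x = 0\<^sub>v n"
      using ind V unfolding indep_on_def by simp
    then have "x = 0\<^sub>v n" using xc xs Vx by blast
    then have "transpose_mat H *\<^sub>v y = 0\<^sub>v n" unfolding x_def .
    then show "y = 0\<^sub>v (dim_col (transpose_mat (subm H ?S)))"
      using dual_inj[OF H sH] yc H unfolding injm_def by simp
  qed
  then have "surjm (subm H ?S)" by (rule LT[OF sub])
  then show ?thesis using spans_on_iff[OF H S] by simp
qed

lemma prod_single:
  assumes "finite I"
  shows "(\<Prod>i\<in>I. (Poly_Mapping.single (g i) (1::'b::comm_semiring_1) :: ('k::comm_monoid_add \<Rightarrow>\<^sub>0 'b)))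
    = Poly_Mapping.single (\<Sum>i\<in>I. g i) 1"
  using assms by (induction I rule: finite_induct) (auto simp: mult_single)

lemma fract_hom: "comm_ring_hom (\<lambda>a::'b::idom. Fraction_Field.Fract a 1)"
  by unfold_locales (simp_all add: add_fract mult_fract One_fract_def Zero_fract_def)

lemma det_generic_ne0:
  fixes f :: "nat \<Rightarrow> nat \<Rightarrow> nat"
  assumes inj: "\<And>i t i' t'. i < r \<Longrightarrow> t < r \<Longrightarrow> i' < r \<Longrightarrow> t' < r \<Longrightarrow> f i t = f i' t' \<Longrightarrow> i = i' \<and> t = t'"
  shows "det (mat r r (\<lambda>(i, t). Fraction_Field.Fract
      (Poly_Mapping.single (Poly_Mapping.single (f i t) 1) 1 :: (nat \<Rightarrow>\<^sub>0 nat) \<Rightarrow>\<^sub>0 'a::field) 1)) \<noteq> 0"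
proof -
  define P :: "((nat \<Rightarrow>\<^sub>0 nat) \<Rightarrow>\<^sub>0 'a) mat" where
    "P = mat r r (\<lambda>(i, t). Poly_Mapping.single (Poly_Mapping.single (f i t) 1) 1)"
  have mP: "mat r r (\<lambda>(i, t). Fraction_Field.Fract
      (Poly_Mapping.single (Poly_Mapping.single (f i t) 1) 1 :: (nat \<Rightarrow>\<^sub>0 nat) \<Rightarrow>\<^sub>0 'a) 1)
      = map_mat (\<lambda>a. Fraction_Field.Fract a 1) P"
    unfolding P_def by (auto intro!: eq_matI)
  define \<mu> where "\<mu> p = (\<Sum>i\<in>{0..<r}. Poly_Mapping.single (f i (p i)) (1::nat))" for p :: "nat \<Rightarrow> nat"
  have trm: "signof p * (\<Prod>i = 0..<r. P $$ (i, p i)) = Poly_Mapping.single (\<mu> p) (signof p)"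
    if p: "p permutes {0..<r}" for p
  proof -
    have "(\<Prod>i = 0..<r. P $$ (i, p i)) = (\<Prod>i = 0..<r. Poly_Mapping.single (Poly_Mapping.single (f i (p i)) (1::nat)) (1::'a))"
      by (rule prod.cong) (use permutes_in_image[OF p] in \<open>auto simp: P_def\<close>)
    also have "\<dots> = Poly_Mapping.single (\<mu> p) 1" unfolding \<mu>_def by (rule prod_single) simp
    finally have "signof p * (\<Prod>i = 0..<r. P $$ (i, p i)) = Poly_Mapping.single 0 (signof p) * Poly_Mapping.single (\<mu> p) 1"
      by (simp add: single_of_int)
    also have "\<dots> = Poly_Mapping.single (\<mu> p) (signof p)" by (simp del: single_of_int add: mult_single)
    finally show ?thesis .
  qed
  have lk: "Poly_Mapping.lookup (\<mu> p) (f i i) = (1 when p i = i)" if p: "p permutes {0..<r}" and i: "i < r" for p i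
  proof -
    have "Poly_Mapping.lookup (\<mu> p) (f i i) = (\<Sum>j\<in>{0..<r}. (1::nat) when f j (p j) = f i i)"
      unfolding \<mu>_def by (simp add: lookup_sum lookup_single)
    also have "\<dots> = (\<Sum>j\<in>{0..<r}. (1 when p i = i) when j = i)"
    proof (rule sum.cong)
      fix j assume j: "j \<in> {0..<r}"
      have pj: "p j < r" using permutes_in_image[OF p] j by auto
      show "((1::nat) when f j (p j) = f i i) = ((1 when p i = i) when j = i)"
        using inj[OF _ pj i i] j by (auto simp: when_def)
    qed simp
    also have "\<dots> = (1 when p i = i)" using i by (simp add: when_def)
    finally show ?thesis .
  qed
  have pid: "p = id" if p: "p permutes {0..<r}" and e: "\<mu> p = \<mu> id" for p
  proof
    fix i show "p i = id i"
    proof (cases "i < r")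
      case True
      have "Poly_Mapping.lookup (\<mu> p) (f i i) = 1" using e lk[OF permutes_id True] by simp
      then show ?thesis using lk[OF p True] by (auto simp: when_def split: if_splits)
    next
      case False then show ?thesis using permutes_not_in[OF p] by auto
    qed
  qed
  have "det P = (\<Sum>p\<in>{p. p permutes {0..<r}}. signof p * (\<Prod>i = 0..<r. P $$ (i, p i)))"
    unfolding det_def P_def by simp
  also have "\<dots> = (\<Sum>p\<in>{p. p permutes {0..<r}}. Poly_Mapping.single (\<mu> p) (signof p))"
    by (rule sum.cong) (auto simp: trm)
  finally have "Poly_Mapping.lookup (det P) (\<mu> id) = (\<Sum>p\<in>{p. p permutes {0..<r}}. (signof p when \<mu> p = \<mu> id))"
    by (simp add: lookup_sum lookup_single)
  also have "\<dots> = (\<Sum>p\<in>{p. p permutes {0..<r}}. (if p = id then 1 else 0))"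
    by (rule sum.cong) (auto simp: when_def pid)
  also have "\<dots> = 1" by (simp add: finite_permutations)
  finally have "det P \<noteq> 0" by auto
  then have "Fraction_Field.Fract (det P) 1 \<noteq> 0" by (simp add: Zero_fract_def eq_fract)
  then show ?thesis unfolding mP comm_ring_hom.hom_det[OF fract_hom] .
qed


lemma generic_carrier: "generic_mat m N \<in> carrier_mat m N"
  unfolding generic_mat_def by simp

lemma inj_gen_idx:
  fixes a a' i i' N :: nat
  assumes "a < N" "a' < N" "i * N + a = i' * N + a'"
  shows "i = i' \<and> a = a'"
proof -
  have N: "N > 0" using assms(1) by simp
  have "(a + i * N) div N = i" "(a' + i' * N) div N = i'" using assms(1,2) N by simp_all
  then have "(i * N + a) div N = i" "(i' * N + a') div N = i'" by (simp_all add: add.commute)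
  moreover have "(i * N + a) mod N = a" "(i' * N + a') mod N = a'" using assms(1,2) by auto
  ultimately show ?thesis using assms(3) by metis
qed

lemma det_subm_generic_ne0:
  assumes U: "U \<subseteq> {..<N}" and q: "q \<le> m" and qU: "q = card U"
  shows "det (mat q q (\<lambda>(i, t). subm (generic_mat m N :: ((nat \<Rightarrow>\<^sub>0 nat) \<Rightarrow>\<^sub>0 'a::field) fract mat) U $$ (i, t))) \<noteq> 0"
proof -
  have fU: "finite U" using U finite_subset by blast
  let ?s = "sorted_list_of_set U"
  have e: "mat q q (\<lambda>(i, t). subm (generic_mat m N :: ((nat \<Rightarrow>\<^sub>0 nat) \<Rightarrow>\<^sub>0 'a) fract mat) U $$ (i, t))
    = mat q q (\<lambda>(i, t). Fraction_Field.Fract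
      (Poly_Mapping.single (Poly_Mapping.single (i * N + ?s ! t) 1) 1 :: (nat \<Rightarrow>\<^sub>0 nat) \<Rightarrow>\<^sub>0 'a) 1)"
  proof (rule eq_matI)
    fix i t assume i: "i < dim_row (mat q q (\<lambda>(i, t). Fraction_Field.Fract
      (Poly_Mapping.single (Poly_Mapping.single (i * N + ?s ! t) 1) 1 :: (nat \<Rightarrow>\<^sub>0 nat) \<Rightarrow>\<^sub>0 'a) 1))"
      and t: "t < dim_col (mat q q (\<lambda>(i, t). Fraction_Field.Fract
      (Poly_Mapping.single (Poly_Mapping.single (i * N + ?s ! t) 1) 1 :: (nat \<Rightarrow>\<^sub>0 nat) \<Rightarrow>\<^sub>0 'a) 1))"
    have st: "?s ! t < N" using sl_in[OF fU, of t] t qU U by auto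
    show "mat q q (\<lambda>(i, t). subm (generic_mat m N :: ((nat \<Rightarrow>\<^sub>0 nat) \<Rightarrow>\<^sub>0 'a) fract mat) U $$ (i, t)) $$ (i, t) =
      mat q q (\<lambda>(i, t). Fraction_Field.Fract
      (Poly_Mapping.single (Poly_Mapping.single (i * N + ?s ! t) 1) 1 :: (nat \<Rightarrow>\<^sub>0 nat) \<Rightarrow>\<^sub>0 'a) 1) $$ (i, t)"
      using i t q qU st unfolding subm_def generic_mat_def by simp
  qed auto
  have inj: "i = i' \<and> t = t'" if "i < q" "t < q" "i' < q" "t' < q" "i * N + ?s ! t = i' * N + ?s ! t'" for i t i' t'
  proof -
    have "?s ! t < N" "?s ! t' < N" using sl_in[OF fU] that qU U by auto
    then have "i = i'" "?s ! t = ?s ! t'" using inj_gen_idx that(5) by blast+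
    moreover have "t = t'"
      using \<open>?s ! t = ?s ! t'\<close> that qU distinct_sorted_list_of_set[of U] nth_eq_iff_index_eq fU
      by (metis length_sorted_list_of_set)
    ultimately show ?thesis by simp
  qed
  show ?thesis unfolding e by (rule det_generic_ne0) (use inj in blast)
qed

lemma generic_indep:
  assumes U: "U \<subseteq> {..<N}" and q: "card U \<le> m"
  shows "indep_on (generic_mat m N :: ((nat \<Rightarrow>\<^sub>0 nat) \<Rightarrow>\<^sub>0 'a::field) fract mat) U"
proof -
  let ?W = "generic_mat m N :: ((nat \<Rightarrow>\<^sub>0 nat) \<Rightarrow>\<^sub>0 'a) fract mat"
  let ?q = "card U"
  let ?S = "subm ?W U"
  let ?Q = "mat ?q ?q (\<lambda>(i, t). ?S $$ (i, t))"
  have W: "?W \<in> carrier_mat m N" by (rule generic_carrier)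
  have Q: "?Q \<in> carrier_mat ?q ?q" by simp
  have d: "det ?Q \<noteq> 0" by (rule det_subm_generic_ne0[OF U q refl])
  have "injm ?S" unfolding injm_def
  proof (intro ballI impI)
    fix y assume yc0: "y \<in> carrier_vec (dim_col ?S)" and Sy0: "?S *\<^sub>v y = 0\<^sub>v (dim_row ?S)"
    have yc: "y \<in> carrier_vec ?q" using yc0 by simp
    have "?Q *\<^sub>v y = 0\<^sub>v ?q"
    proof (rule eq_vecI)
      fix i assume "i < dim_vec (0\<^sub>v ?q :: ((nat \<Rightarrow>\<^sub>0 nat) \<Rightarrow>\<^sub>0 'a) fract vec)"
      then have i: "i < ?q" by simp
      have "(?Q *\<^sub>v y) $ i = (?S *\<^sub>v y) $ i"
        using i q yc W unfolding mult_mat_vec_def scalar_prod_def by (auto intro!: sum.cong)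
      also have "\<dots> = 0" using Sy0 i q W by simp
      finally show "(?Q *\<^sub>v y) $ i = (0\<^sub>v ?q :: ((nat \<Rightarrow>\<^sub>0 nat) \<Rightarrow>\<^sub>0 'a) fract vec) $ i" using i by simp
    qed simp
    then show "y = 0\<^sub>v (dim_col ?S)" using d det_0_iff_vec_prod_zero_field[OF Q] yc by auto
  qed
  then show ?thesis using indep_on_iff[OF W U] by simp
qed

lemma generic_spans:
  assumes U: "U \<subseteq> {..<N}" and q: "m \<le> card U"
  shows "spans_on (generic_mat m N :: ((nat \<Rightarrow>\<^sub>0 nat) \<Rightarrow>\<^sub>0 'a::field) fract mat) U"
proof -
  let ?W = "generic_mat m N :: ((nat \<Rightarrow>\<^sub>0 nat) \<Rightarrow>\<^sub>0 'a) fract mat"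
  have W: "?W \<in> carrier_mat m N" by (rule generic_carrier)
  obtain U' where U': "U' \<subseteq> U" "card U' = m" "finite U'" using obtain_subset_with_card_n[OF q] by blast
  have U'N: "U' \<subseteq> {..<N}" using U' U by auto
  let ?S = "subm ?W U'"
  let ?Q = "mat m m (\<lambda>(i, t). ?S $$ (i, t))"
  have SQ: "?S = ?Q" using W U' by (auto intro!: eq_matI)
  have Q: "?Q \<in> carrier_mat m m" by simp
  have d: "det ?Q \<noteq> 0" using det_subm_generic_ne0[OF U'N _ U'(2)[symmetric], of m] U'(2) by simp
  have "injm ?S" unfolding injm_def
  proof (intro ballI impI)
    fix y assume yc0: "y \<in> carrier_vec (dim_col ?S)" and Sy0: "?S *\<^sub>v y = 0\<^sub>v (dim_row ?S)"
    have yc: "y \<in> carrier_vec m" using yc0 U' by simp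
    have "?Q *\<^sub>v y = 0\<^sub>v m" using Sy0 SQ W by simp
    then show "y = 0\<^sub>v (dim_col ?S)" using d det_0_iff_vec_prod_zero_field[OF Q] yc U' by auto
  qed
  then have "surjm ?S" by (rule injm_square_surjm[rotated]) (use W U' in simp)
  then have sp: "spans_on ?W U'" using spans_on_iff[OF W U'N] by simp
  show ?thesis unfolding spans_on_def
  proof
    fix b :: "((nat \<Rightarrow>\<^sub>0 nat) \<Rightarrow>\<^sub>0 'a) fract vec" assume b: "b \<in> carrier_vec (dim_row ?W)"
    from bspec[OF sp[unfolded spans_on_def] b] obtain x where
      x: "x \<in> carrier_vec (dim_col ?W)" "suppd x U'" "?W *\<^sub>v x = b" by blast
    have "suppd x U" using x(2) U'(1) unfolding suppd_def by blast
    then show "\<exists>x\<in>carrier_vec (dim_col ?W). suppd x U \<and> ?W *\<^sub>v x = b" using x by blast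
  qed
qed

theorem proposition3p6:
  fixes V H :: "'a::field mat" and n k d :: nat
  assumes "V \<in> carrier_mat k n" and "mrank V = k"
    and "H \<in> carrier_mat (n - k) n" and "mrank H = n - k"
    and "V * transpose_mat H = 0\<^sub>m k (n - k)"
    and "d \<le> k"
  shows "rMDS_sub2 d V \<longleftrightarrow> rMDS_sup2 d H"
proof -
  have V: "V \<in> carrier_mat k n" and H: "H \<in> carrier_mat (n - k) n"
    and VH: "V * transpose_mat H = 0\<^sub>m k (n - k)" and dk: "d \<le> k" using assms by auto
  have kn: "k \<le> n" using mrank_le_col[of V] assms(2) V by simp
  have sV: "surjm V" using mrank_row_iff_surjm[of V] assms(2) V by simp
  have sH: "surjm H" using mrank_row_iff_surjm[of H] assms(4) H by simp
  have hk: "(n - k) + k = n" using kn by simp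
  have dV: "dim_row V = k" "dim_col V = n" using V by auto
  have dH: "dim_row H = n - k" "dim_col H = n" using H by auto
  let ?W1 = "generic_mat (k - d) n :: ((nat \<Rightarrow>\<^sub>0 nat) \<Rightarrow>\<^sub>0 'a) fract mat"
  let ?W2 = "generic_mat (n - k + d) n :: ((nat \<Rightarrow>\<^sub>0 nat) \<Rightarrow>\<^sub>0 'a) fract mat"
  have W1: "?W1 \<in> carrier_mat (k - d) n" by (rule generic_carrier)
  have W2: "?W2 \<in> carrier_mat (n - k + d) n" by (rule generic_carrier)
  have E: "{} \<subseteq> {..<n}" by simp
  show ?thesis
  proof
    assume sub: "rMDS_sub2 d V"
    show "rMDS_sup2 d H" unfolding rMDS_sup2_def dH
    proof (intro allI impI)
      fix A1 A2 assume A1: "A1 \<subseteq> {..<n}" and A2: "A2 \<subseteq> {..<n}"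
        and sp: "sat_prop TYPE('a) (n - k + d) n [A1, A2]"
      have A12: "A1 \<union> A2 \<subseteq> {..<n}" using A1 A2 by auto
      have "spans_on ?W2 (A1 \<union> A2)"
        using sp saturated_iff[OF W2 A1 A2] unfolding sat_prop_def by simp
      then have c: "n - k + d \<le> card (A1 \<union> A2)" by (rule spans_on_card[OF W2 A12])
      define T where "T = {..<n} - (A1 \<union> A2)"
      have T: "T \<subseteq> {..<n}" unfolding T_def by auto
      have cT: "card T = n - card (A1 \<union> A2)" unfolding T_def
        using card_Diff_subset[OF finite_subset[OF A12] A12] by simp
      have "card T \<le> k - d" using cT c kn dk by simp
      then have "indep_on ?W1 T" by (rule generic_indep[OF T])
      then have "full_col_rank (Gmat ?W1 [T, {}])" using Gmat_injm_iff[OF W1 T E] by simp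
      then have "full_col_rank (Gmat V [T, {}])"
        using sub T E unfolding rMDS_sub2_def dV by blast
      then have "indep_on V T" using Gmat_injm_iff[OF V T E] by simp
      then have "spans_on H ({..<n} - T)" by (rule dual_X[OF V H sH VH T])
      moreover have "{..<n} - T = A1 \<union> A2" unfolding T_def using A12 by auto
      ultimately show "saturated H [A1, A2]" using saturated_iff[OF H A1 A2] by simp
    qed
  next
    assume sup: "rMDS_sup2 d H"
    show "rMDS_sub2 d V" unfolding rMDS_sub2_def dV
    proof (intro allI impI)
      fix A1 A2 assume A1: "A1 \<subseteq> {..<n}" and A2: "A2 \<subseteq> {..<n}"
        and fc: "full_col_rank (Gmat ?W1 [A1, A2])"
      have A12: "A1 \<union> A2 \<subseteq> {..<n}" using A1 A2 by auto
      have dj: "A1 \<inter> A2 = {}" and ind: "indep_on ?W1 (A1 \<union> A2)"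
        using fc Gmat_injm_iff[OF W1 A1 A2] by auto
      have c: "card (A1 \<union> A2) \<le> k - d" by (rule indep_on_card[OF W1 A12 ind])
      define S where "S = {..<n} - (A1 \<union> A2)"
      have S: "S \<subseteq> {..<n}" unfolding S_def by auto
      have cS: "card S = n - card (A1 \<union> A2)" unfolding S_def
        using card_Diff_subset[OF finite_subset[OF A12] A12] by simp
      have "n - k + d \<le> card S" using cS c kn dk by simp
      then have "spans_on ?W2 S" by (rule generic_spans[OF S])
      then have "saturated ?W2 [S, {}]" using saturated_iff[OF W2 S E] by simp
      then have "sat_prop TYPE('a) (n - k + d) n [S, {}]" unfolding sat_prop_def .
      then have "saturated H [S, {}]" using sup S E unfolding rMDS_sup2_def dH by blast
      then have "spans_on H S" using saturated_iff[OF H S E] by simp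
      then have "indep_on V (A1 \<union> A2)"
        unfolding S_def by (rule dual_Y[OF V H hk sV sH VH A12])
      then show "full_col_rank (Gmat V [A1, A2])" using Gmat_injm_iff[OF V A1 A2] dj by simp
    qed
  qed
qed


end
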